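(* Let $n\ge 3$, $X=\{1,\dots,n\}$, let $\mathcal{C}=\{C_1,\dots,C_m\}$ be a partial circular ordering with $m\ge 3$ blocks, equipped with the balanced TSP weighting $\mu$, and fix $r\ne s$. Then $|o(\mathcal{C}_{r,s})| = 2|o(\mathcal{C})|/(m-1)$, and for distinct $i,j\in X$: \[ \eta_{\mathcal{C}_{r,s}}(i,j) = \begin{cases} \frac{2|o(\mathcal{C})|}{m-1} & \text{if } i,j \text{ are consecutive in some block of } \mathcal{C},\\ \frac{2|o(\mathcal{C})|\mu(i)\mu(j)}{m-1} & \text{if } \{i,j\} \text{ has one element in } C_r \text{ and one in } C_s,\\ \frac{4|o(\mathcal{C})|\mu(i)\mu(j)}{(m-1)(m-2)} & \text{if } i\in C_t,\ j\in C_u,\ t\ne u,\ t,u\notin\{r,s\},\\ \frac{2|o(\mathcal{C})|\mu(i)\mu(j)}{(m-1)(m-2)} & \text{if one of } i,j \text{ lies in } C_r\cup C_s \text{ and the other in } C_t,\ t\notin\{r,s\},\\ 0 & \text{otherwise.} \end{cases}\]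
   Context: A circular ordering of $X$ is a listing $(x_1,\dots,x_n)$ of the elements of $X$ regarded as a cyclic arrangement (with $x_{n+1}=x_1$); two listings are identified if they differ by a rotation or a reversal. A partial circular ordering $\mathcal{C}=\{C_1,\dots,C_m\}$ is a partition of $X$ into $m$ nonempty blocks, each block equipped with a linear order (a path; a block and its reversal are regarded as the same); elements are consecutive in a block if adjacent in this path. $\hat{C}_r$ denotes the set of endpoints of the path $C_r$ ($\hat C_r=C_r$ if $|C_r|=1$, otherwise its first and last element). A circular ordering is consistent with $\mathcal{C}$ if every pair of elements consecutive in some block is adjacent in it; $o(\mathcal{C})$ is the set of such circular orderings. The balanced TSP weighting is $\mu:X\to\mathbb{R}$ with $\mu(i)=1$ if $i$ forms a singleton block, $\mu(i)=1/2$ if $i\in\hat C_r$ with $|\hat C_r|=2$, and $\mu(i)=0$ if $i$ is not an endpoint of its block. $\mathcal{C}_{r,s}$ denotes the set of partial circular orderings with $m-1$ blocks obtained from $\mathcal{C}$ by joining an endpoint of $C_r$ to an endpoint of $C_s$ (concatenating the two paths so that these endpoints become consecutive), and $o(\mathcal{C}_{r,s})$ is the set of circular orderings consistent with at least one member of $\mathcal{C}_{r,s}$. For distinct $i,j$, $\eta_{\mathcal{C}_{r,s}}(i,j)$ is the number of circular orderings in $o(\mathcal{C}_{r,s})$ in which $i$ and $j$ are adjacent. *)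

theory Defs
  imports Main "HOL-Library.Multiset" Complex_Main
begin

text \<open>A partial circular ordering of X is given as a list of blocks (index 0..m-1),
each block a nonempty list (a path); the blocks partition X.\<close>
definition partial_circ_ordering :: "'a set \<Rightarrow> 'a list list \<Rightarrow> bool" where
  "partial_circ_ordering X Cs \<longleftrightarrow>
     (\<forall>b\<in>set Cs. b \<noteq> []) \<and> distinct (concat Cs) \<and> set (concat Cs) = X"

definition consec_in_block :: "'a list \<Rightarrow> 'a \<Rightarrow> 'a \<Rightarrow> bool" where
  "consec_in_block b i j \<longleftrightarrow>
     (\<exists>k. Suc k < length b \<and> {b ! k, b ! Suc k} = {i, j})"

definition consec_in_some_block :: "'a list list \<Rightarrow> 'a \<Rightarrow> 'a \<Rightarrow> bool" where
  "consec_in_some_block Cs i j \<longleftrightarrow> (\<exists>b\<in>set Cs. consec_in_block b i j)"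

definition endpoints :: "'a list \<Rightarrow> 'a set" where
  "endpoints b = (if b = [] then {} else {hd b, last b})"

text \<open>A circular ordering is the class of a listing modulo rotation and reversal.\<close>
definition circ_class :: "'a list \<Rightarrow> 'a list set" where
  "circ_class xs = {ys. \<exists>k. ys = rotate k xs \<or> ys = rotate k (rev xs)}"

definition circ_orderings :: "'a set \<Rightarrow> 'a list set set" where
  "circ_orderings X = circ_class ` {xs. distinct xs \<and> set xs = X}"

definition adjacent_list :: "'a list \<Rightarrow> 'a \<Rightarrow> 'a \<Rightarrow> bool" where
  "adjacent_list xs i j \<longleftrightarrow>
     (\<exists>k<length xs. {xs ! k, xs ! ((k + 1) mod length xs)} = {i, j})"

definition adjacent_circ :: "'a list set \<Rightarrow> 'a \<Rightarrow> 'a \<Rightarrow> bool" where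
  "adjacent_circ c i j \<longleftrightarrow> (\<exists>xs\<in>c. adjacent_list xs i j)"

definition consistent_orderings :: "'a set \<Rightarrow> 'a list list \<Rightarrow> 'a list set set" where
  "consistent_orderings X Cs =
     {c \<in> circ_orderings X. \<forall>i j. consec_in_some_block Cs i j \<longrightarrow> adjacent_circ c i j}"

definition tsp_weight :: "'a list list \<Rightarrow> 'a \<Rightarrow> real" where
  "tsp_weight Cs i =
     (if \<exists>b\<in>set Cs. b = [i] then 1
      else if \<exists>b\<in>set Cs. i \<in> endpoints b \<and> card (endpoints b) = 2 then 1/2
      else 0)"

definition join_blocks :: "'a list list \<Rightarrow> nat \<Rightarrow> nat \<Rightarrow> 'a list list set" where
  "join_blocks Cs r s =
     {b # [Cs ! k. k \<leftarrow> [0..<length Cs], k \<noteq> r, k \<noteq> s] | b.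
        \<exists>x\<in>{Cs ! r, rev (Cs ! r)}. \<exists>y\<in>{Cs ! s, rev (Cs ! s)}. b = x @ y}"

definition consistent_orderings_join :: "'a set \<Rightarrow> 'a list list \<Rightarrow> nat \<Rightarrow> nat \<Rightarrow> 'a list set set" where
  "consistent_orderings_join X Cs r s = (\<Union>D\<in>join_blocks Cs r s. consistent_orderings X D)"

definition eta_join :: "'a set \<Rightarrow> 'a list list \<Rightarrow> nat \<Rightarrow> nat \<Rightarrow> 'a \<Rightarrow> 'a \<Rightarrow> nat" where
  "eta_join X Cs r s i j =
     card {c \<in> consistent_orderings_join X Cs r s. adjacent_circ c i j}"

end

theory Submission
  imports Defs
begin


lemma rot_inv: "rotate (length xs - k mod length xs) (rotate k xs) = xs"
proof (cases "xs = []")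
  case False
  have "(length xs - k mod length xs + k) mod length xs = 0"
    using False by (metis add.commute le_add_diff_inverse2 less_imp_le_nat length_greater_0_conv mod_add_right_eq mod_less_divisor mod_self)
  then show ?thesis by (simp add: rotate_rotate)
qed simp

lemma rev_rot: "\<exists>b'. rev (rotate b xs) = rotate b' (rev xs)"
proof (cases "xs = []")
  case False
  let ?n = "length xs"
  have "rotate (?n - b mod ?n) (rev xs) = rev (rotate (?n - (?n - b mod ?n) mod ?n) xs)"
    by (simp add: rotate_rev)
  also have "rotate (?n - (?n - b mod ?n) mod ?n) xs = rotate b xs"
  proof (cases "b mod ?n = 0")
    case True then show ?thesis using False by (simp add: rotate_conv_mod[of b])
  next
    case F: False
    have "(?n - b mod ?n) mod ?n = ?n - b mod ?n" using F False by simp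
    then show ?thesis using F False
      by (metis diff_diff_cancel less_imp_le_nat length_greater_0_conv mod_less_divisor rotate_conv_mod)
  qed
  finally show ?thesis by metis
qed simp

lemma adj_list_rotate_imp: "adjacent_list (rotate q xs) i j \<Longrightarrow> adjacent_list xs i j"
proof -
  assume "adjacent_list (rotate q xs) i j"
  then obtain k where k: "k < length xs" "{rotate q xs ! k, rotate q xs ! ((k+1) mod length xs)} = {i,j}"
    unfolding adjacent_list_def by auto
  let ?n = "length xs"
  have n: "?n > 0" using k(1) by linarith
  have "rotate q xs ! k = xs ! ((q+k) mod ?n)" using k by (simp add: nth_rotate)
  moreover have "rotate q xs ! ((k+1) mod ?n) = xs ! ((q + (k+1) mod ?n) mod ?n)" using n by (simp add: nth_rotate)
  moreover have "(q + (k+1) mod ?n) mod ?n = ((q+k) mod ?n + 1) mod ?n" by (simp add: mod_simps)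
  ultimately have "{xs ! ((q+k) mod ?n), xs ! (((q+k) mod ?n + 1) mod ?n)} = {i,j}" using k by simp
  then show ?thesis unfolding adjacent_list_def using n by (intro exI[of _ "(q+k) mod ?n"]) auto
qed

lemma adj_list_rotate[simp]: "adjacent_list (rotate q xs) i j = adjacent_list xs i j"
  by (metis adj_list_rotate_imp rot_inv)

lemma adj_list_rev_imp: "adjacent_list (rev xs) i j \<Longrightarrow> adjacent_list xs i j"
proof -
  assume "adjacent_list (rev xs) i j"
  then obtain k where k: "k < length xs" "{rev xs ! k, rev xs ! ((k+1) mod length xs)} = {i,j}"
    unfolding adjacent_list_def by auto
  let ?n = "length xs"
  show ?thesis
  proof (cases "k + 1 < ?n")
    case True
    have s1: "Suc (?n - 2 - k) = ?n - Suc k" using True by linarith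
    have e1: "rev xs ! k = xs ! (Suc (?n - 2 - k))" unfolding s1 using True k(1) by (simp add: rev_nth)
    have e2: "rev xs ! ((k+1) mod ?n) = xs ! (?n - 2 - k)" using True by (simp add: rev_nth)
    have e3: "(?n - 2 - k + 1) mod ?n = Suc (?n - 2 - k)" using True by simp
    have "{xs ! (?n - 2 - k), xs ! ((?n - 2 - k + 1) mod ?n)} = {i,j}"
      using k(2) unfolding e1 e2 e3 by (simp add: insert_commute)
    then show ?thesis unfolding adjacent_list_def using True by (intro exI[of _ "?n - 2 - k"]) simp
  next
    case False
    then have kk: "k = ?n - 1" using k by simp
    have e1: "rev xs ! k = xs ! 0" using kk k(1) by (simp add: rev_nth)
    have "k + 1 = ?n" using kk k(1) by linarith
    then have s2: "(k+1) mod ?n = 0" by simp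
    have e2: "rev xs ! ((k+1) mod ?n) = xs ! (?n - 1)" unfolding s2 proof -
      have "0 < length xs" using k(1) by linarith
      then show "rev xs ! 0 = xs ! (?n - 1)" using rev_nth[of 0 xs] by simp
    qed
    have "?n - 1 + 1 = ?n" using k(1) by linarith
    then have e3: "(?n - 1 + 1) mod ?n = 0" by simp
    have "{xs ! (?n - 1), xs ! ((?n - 1 + 1) mod ?n)} = {i,j}"
      using k(2) unfolding e1 e2 e3 by (simp add: insert_commute)
    then show ?thesis unfolding adjacent_list_def using k(1) by (intro exI[of _ "?n - 1"]) simp
  qed
qed

lemma adj_list_rev[simp]: "adjacent_list (rev xs) i j = adjacent_list xs i j"
  by (metis adj_list_rev_imp rev_rev_ident)

lemma adj_circ_class: "adjacent_circ (circ_class xs) i j = adjacent_list xs i j"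
proof
  assume "adjacent_circ (circ_class xs) i j"
  then obtain ys where "ys \<in> circ_class xs" "adjacent_list ys i j" unfolding adjacent_circ_def by blast
  then show "adjacent_list xs i j" unfolding circ_class_def by auto
next
  assume "adjacent_list xs i j"
  moreover have "xs \<in> circ_class xs" unfolding circ_class_def by (rule CollectI, rule exI[of _ 0]) simp
  ultimately show "adjacent_circ (circ_class xs) i j" unfolding adjacent_circ_def by blast
qed

lemma adj_list_sym: "adjacent_list xs i j = adjacent_list xs j i"
  unfolding adjacent_list_def by (auto simp: insert_commute)

lemma cc_refl: "xs \<in> circ_class xs"
  unfolding circ_class_def by (auto intro: exI[of _ 0])

lemma rev_rot2: "\<exists>b'. rev (rotate b (rev xs)) = rotate b' xs"
  using rev_rot[of b "rev xs"] by simp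

lemma cc_sym: "ys \<in> circ_class xs \<Longrightarrow> xs \<in> circ_class ys"
proof -
  assume "ys \<in> circ_class xs"
  then obtain k where "ys = rotate k xs \<or> ys = rotate k (rev xs)" unfolding circ_class_def by blast
  then show ?thesis
  proof
    assume h: "ys = rotate k xs"
    have "xs = rotate (length xs - k mod length xs) ys" unfolding h by (rule rot_inv[symmetric])
    then show ?thesis unfolding circ_class_def by blast
  next
    assume h: "ys = rotate k (rev xs)"
    obtain b where "rev ys = rotate b xs" using rev_rot2[of k xs] h by metis
    then have "xs = rotate (length xs - b mod length xs) (rev ys)" using rot_inv[of xs b] by simp
    then show ?thesis unfolding circ_class_def by blast
  qed
qed

lemma cc_trans: "ys \<in> circ_class xs \<Longrightarrow> zs \<in> circ_class ys \<Longrightarrow> zs \<in> circ_class xs"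
proof -
  assume "ys \<in> circ_class xs" "zs \<in> circ_class ys"
  then obtain k l where k: "ys = rotate k xs \<or> ys = rotate k (rev xs)"
    and l: "zs = rotate l ys \<or> zs = rotate l (rev ys)" unfolding circ_class_def by blast
  have "\<exists>q. zs = rotate q xs \<or> zs = rotate q (rev xs)"
  proof (cases "ys = rotate k xs")
    case True
    show ?thesis using l
    proof
      assume "zs = rotate l ys" then show ?thesis using True by (metis rotate_rotate)
    next
      assume z: "zs = rotate l (rev ys)"
      obtain b where "rev ys = rotate b (rev xs)" using rev_rot[of k xs] True by metis
      then show ?thesis using z by (metis rotate_rotate)
    qed
  next
    case False
    then have Y: "ys = rotate k (rev xs)" using k by blast
    show ?thesis using l
    proof
      assume "zs = rotate l ys" then show ?thesis using Y by (metis rotate_rotate)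
    next
      assume z: "zs = rotate l (rev ys)"
      obtain b where "rev ys = rotate b xs" using rev_rot2[of k xs] Y by metis
      then show ?thesis using z by (metis rotate_rotate)
    qed
  qed
  then show ?thesis unfolding circ_class_def by blast
qed

lemma cc_eq: "ys \<in> circ_class xs \<Longrightarrow> circ_class ys = circ_class xs"
  by (meson cc_sym cc_trans subsetI subset_antisym)

lemma cc_mem: "ys \<in> circ_class xs \<Longrightarrow> distinct ys = distinct xs \<and> set ys = set xs \<and> length ys = length xs"
  unfolding circ_class_def by auto



lemma mod_pred_succ: "0 < (n::nat) \<Longrightarrow> t < n \<Longrightarrow> ((t + n - 1) mod n + 1) mod n = t"
proof (cases t)
  case 0
  assume "0 < n"
  then have "n - 1 < n" "n - 1 + 1 = n" by auto
  then show ?thesis using 0 by simp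
next
  case (Suc s)
  assume "0 < n" "t < n"
  then have "t + n - 1 = s + n" using Suc by simp
  then have "(t + n - 1) mod n = s" using Suc \<open>t < n\<close> by simp
  then show ?thesis using Suc \<open>t < n\<close> by simp
qed

lemma adj_nth_iff:
  assumes d: "distinct xs" and n: "length xs \<ge> 3" and t: "t < length xs"
  shows "adjacent_list xs (xs!t) v \<longleftrightarrow>
           v = xs ! ((t+1) mod length xs) \<or> v = xs ! ((t + length xs - 1) mod length xs)"
proof -
  let ?n = "length xs"
  have n0: "0 < ?n" using n by linarith
  show ?thesis
  proof
    assume "adjacent_list xs (xs!t) v"
    then obtain k where k: "k < ?n" "{xs!k, xs!((k+1) mod ?n)} = {xs!t, v}"
      unfolding adjacent_list_def by blast
    have k1: "(k+1) mod ?n < ?n" using n0 by simp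
    from k(2) have "(xs!k = xs!t \<and> xs!((k+1) mod ?n) = v) \<or> (xs!k = v \<and> xs!((k+1) mod ?n) = xs!t)"
      by (auto simp: doubleton_eq_iff)
    then show "v = xs ! ((t+1) mod ?n) \<or> v = xs ! ((t + ?n - 1) mod ?n)"
    proof
      assume h: "xs!k = xs!t \<and> xs!((k+1) mod ?n) = v"
      then have "k = t" using d k(1) t nth_eq_iff_index_eq by blast
      then show ?thesis using h by simp
    next
      assume h: "xs!k = v \<and> xs!((k+1) mod ?n) = xs!t"
      then have "(k+1) mod ?n = t" using d k1 t nth_eq_iff_index_eq by blast
      then have "k = (t + ?n - 1) mod ?n"
      proof (cases "k + 1 < ?n")
        case True
        assume "(k+1) mod ?n = t"
        then have "t = k + 1" using True by simp
        then have "t + ?n - 1 = k + ?n" by simp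
        then show ?thesis using k(1) by simp
      next
        case False
        assume "(k+1) mod ?n = t"
        then have "k + 1 = ?n" using False k(1) by linarith
        then have "t = 0" using \<open>(k+1) mod ?n = t\<close> by simp
        then show ?thesis using \<open>k + 1 = ?n\<close> k(1) by simp
      qed
      then show ?thesis using h by simp
    qed
  next
    assume "v = xs ! ((t+1) mod ?n) \<or> v = xs ! ((t + ?n - 1) mod ?n)"
    then show "adjacent_list xs (xs!t) v"
    proof
      assume "v = xs ! ((t+1) mod ?n)"
      then show ?thesis unfolding adjacent_list_def using t by blast
    next
      assume v: "v = xs ! ((t + ?n - 1) mod ?n)"
      have "((t + ?n - 1) mod ?n + 1) mod ?n = t" using mod_pred_succ n0 t by blast
      then have "{xs ! ((t + ?n - 1) mod ?n), xs ! (((t + ?n - 1) mod ?n + 1) mod ?n)} = {xs!t, v}"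
        using v by auto
      moreover have "(t + ?n - 1) mod ?n < ?n" using n0 by simp
      ultimately show ?thesis unfolding adjacent_list_def by blast
    qed
  qed
qed

definition path_adj :: "'a list \<Rightarrow> 'a list \<Rightarrow> bool" where
  "path_adj xs L \<longleftrightarrow> (\<forall>t. Suc t < length L \<longrightarrow> adjacent_list xs (L!t) (L!Suc t))"

lemma path_follow:
  assumes d: "distinct ys" and n: "length ys \<ge> 3" and dL: "distinct L" and lL: "length L \<le> length ys"
    and L2: "2 \<le> length L" and h0: "ys!0 = L!0" and h1: "ys!1 = L!1" and p: "path_adj ys L"
  shows "\<forall>t<length L. ys!t = L!t"
proof -
  let ?n = "length ys"
  have Q: "Suc t < length L \<longrightarrow> ys!t = L!t \<and> ys!Suc t = L!Suc t" for t
  proof (induction t)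
    case 0 then show ?case using h0 h1 by simp
  next
    case (Suc t)
    show ?case
    proof
      assume a: "Suc (Suc t) < length L"
      then have IH: "ys!t = L!t" "ys!Suc t = L!Suc t" using Suc by auto
      have "adjacent_list ys (L!Suc t) (L!Suc (Suc t))" using p a unfolding path_adj_def by blast
      then have "adjacent_list ys (ys!Suc t) (L!Suc (Suc t))" using IH by simp
      moreover have st: "Suc t < ?n" using a lL by linarith
      ultimately have "L!Suc (Suc t) = ys ! ((Suc t+1) mod ?n) \<or> L!Suc (Suc t) = ys ! ((Suc t + ?n - 1) mod ?n)"
        using adj_nth_iff[OF d n st] by blast
      moreover have "(Suc t + ?n - 1) mod ?n = t" using st by simp
      moreover have "(Suc t+1) mod ?n = Suc (Suc t)" using a lL by simp
      moreover have "L!Suc (Suc t) \<noteq> L!t" using dL a nth_eq_iff_index_eq by fastforce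
      ultimately show "ys!Suc t = L!Suc t \<and> ys!Suc (Suc t) = L!Suc (Suc t)" using IH by auto
    qed
  qed
  show ?thesis
  proof (intro allI impI)
    fix t assume t: "t < length L"
    show "ys!t = L!t"
    proof (cases t)
      case 0 then show ?thesis using h0 by simp
    next
      case (Suc s) then show ?thesis using Q[of s] t by simp
    qed
  qed
qed

lemma cc_adj_eq: "ys \<in> circ_class xs \<Longrightarrow> adjacent_list ys = adjacent_list xs"
proof (intro ext)
  fix i j assume "ys \<in> circ_class xs"
  then show "adjacent_list ys i j = adjacent_list xs i j"
    using adj_circ_class[of ys i j] adj_circ_class[of xs i j] cc_eq by metis
qed

lemma normalize:
  assumes d: "distinct xs" and n: "length xs \<ge> 3" and dL: "distinct L" and sL: "set L \<subseteq> set xs"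
    and ne: "L \<noteq> []" and p: "path_adj xs L"
  shows "\<exists>ys\<in>circ_class xs. take (length L) ys = L"
proof -
  let ?n = "length xs"
  have lL: "length L \<le> ?n" using dL d sL by (metis card_mono distinct_card finite_set)
  obtain q where q: "q < ?n" "xs!q = L!0" using sL ne by (metis hd_conv_nth in_set_conv_nth list.set_sel(1) subsetD)
  define xs1 where "xs1 = rotate q xs"
  have x1: "xs1 \<in> circ_class xs" unfolding xs1_def circ_class_def by blast
  have n0: "0 < ?n" using n by linarith
  have x10: "xs1!0 = L!0" unfolding xs1_def using q nth_rotate[OF n0, of q] by simp
  have d1: "distinct xs1" "length xs1 = ?n" unfolding xs1_def using d by auto
  show ?thesis
  proof (cases "length L = 1")
    case True
    have "take 1 xs1 = [xs1!0]" using d1 n by (cases xs1) auto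
    moreover have "L = [L!0]" using True by (cases L) auto
    ultimately show ?thesis using x1 x10 True by metis
  next
    case False
    have "length L \<noteq> 0" using ne by simp
    then have L2: "2 \<le> length L" using False by linarith
    have "adjacent_list xs (L!0) (L!1)" using p L2 unfolding path_adj_def by auto
    then have "adjacent_list xs1 (xs1!0) (L!1)" using x10 cc_adj_eq[OF x1] by simp
    then have "L!1 = xs1!((0+1) mod ?n) \<or> L!1 = xs1!((0 + ?n - 1) mod ?n)"
      using adj_nth_iff[of xs1 0 "L!1"] d1 n n0 by simp
    then have c: "L!1 = xs1!1 \<or> L!1 = xs1!(?n - 1)" using n n0 by simp
    have key: "\<exists>ys\<in>circ_class xs. take (length L) ys = L"
      if ys: "ys \<in> circ_class xs" "ys!0 = L!0" "ys!1 = L!1" for ys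
    proof -
      have dy: "distinct ys" "length ys = ?n" using ys(1) d cc_mem by blast+
      have "path_adj ys L" using p cc_adj_eq[OF ys(1)] unfolding path_adj_def by simp
      then have "\<forall>t<length L. ys!t = L!t" using path_follow[OF dy(1) _ dL _ L2 ys(2) ys(3)] dy n lL by simp
      then have "take (length L) ys = L" using lL dy by (intro nth_equalityI) auto
      then show ?thesis using ys(1) by blast
    qed
    show ?thesis using c
    proof
      assume "L!1 = xs1!1"
      then show ?thesis using key[OF x1 x10] by simp
    next
      assume h: "L!1 = xs1!(?n - 1)"
      define ys where "ys = rotate (?n - 1) (rev xs1)"
      have "ys \<in> circ_class xs1" unfolding ys_def circ_class_def by blast
      then have y1: "ys \<in> circ_class xs" using cc_trans x1 by blast
      have "ys!0 = rev xs1 ! (?n - 1)" unfolding ys_def using d1 n n0 by (simp add: nth_rotate)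
      also have "... = xs1!0" using d1 n n0 by (simp add: rev_nth)
      finally have y0: "ys!0 = L!0" using x10 by simp
      have "ys!1 = rev xs1 ! ((?n - 1 + 1) mod ?n)" unfolding ys_def using d1 n n0 by (simp add: nth_rotate)
      also have "(?n - 1 + 1) mod ?n = 0" using n0 by simp
      also have "rev xs1 ! 0 = xs1 ! (?n - 1)" using d1 n n0 by (simp add: rev_nth)
      finally have "ys!1 = L!1" using h by simp
      then show ?thesis using key[OF y1 y0] by simp
    qed
  qed
qed

lemma path_in_cycle:
  assumes d: "distinct xs" and n: "length xs \<ge> 3" and dL: "distinct L" and sL: "set L \<subseteq> set xs"
    and p: "path_adj xs L" and lt: "length L < length xs"
    and u: "u \<in> set L" and v: "v \<in> set L" and adj: "adjacent_list xs u v"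
  shows "consec_in_block L u v"
proof -
  let ?n = "length xs"
  have ne: "L \<noteq> []" using u by auto
  obtain ys where ys: "ys \<in> circ_class xs" "take (length L) ys = L" using normalize[OF d n dL sL ne p] by blast
  have dy: "distinct ys" "length ys = ?n" using ys(1) d cc_mem by blast+
  have adj': "adjacent_list ys u v" using adj cc_adj_eq[OF ys(1)] by simp
  have nthL: "\<And>t. t < length L \<Longrightarrow> L!t = ys!t" using ys(2) by (metis nth_take)
  obtain a where a: "a < length L" "L!a = u" using u by (metis in_set_conv_nth)
  obtain b where b: "b < length L" "L!b = v" using v by (metis in_set_conv_nth)
  have an: "a < ?n" "b < ?n" using a b lt by auto
  have ua: "u = ys!a" "v = ys!b" using a b nthL by auto
  have "v = ys ! ((a+1) mod ?n) \<or> v = ys ! ((a + ?n - 1) mod ?n)"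
    using adj_nth_iff[OF dy(1), of a v] adj' ua dy n an by simp
  then show ?thesis
  proof
    assume h: "v = ys ! ((a+1) mod ?n)"
    have a1: "a + 1 < ?n" using a lt by linarith
    then have "ys!b = ys!(a+1)" using h ua by simp
    then have "b = a + 1" using dy an a1 nth_eq_iff_index_eq by metis
    then show ?thesis unfolding consec_in_block_def using a b by (intro exI[of _ a]) auto
  next
    assume h: "v = ys ! ((a + ?n - 1) mod ?n)"
    show ?thesis
    proof (cases a)
      case 0
      have "(a + ?n - 1) mod ?n = ?n - 1" using 0 n by simp
      then have "ys!b = ys!(?n - 1)" using h ua by simp
      moreover have "?n - 1 < ?n" using n by simp
      ultimately have "b = ?n - 1" using dy an nth_eq_iff_index_eq by metis
      then show ?thesis using b lt by simp
    next
      case (Suc a')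
      have "(a + ?n - 1) mod ?n = a'" using Suc an by simp
      then have "ys!b = ys!a'" using h ua by simp
      moreover have "a' < ?n" using Suc an by simp
      ultimately have "b = a'" using dy an nth_eq_iff_index_eq by metis
      then show ?thesis unfolding consec_in_block_def using a b Suc by (intro exI[of _ a']) auto
    qed
  qed
qed

lemma base_cycle:
  assumes d: "distinct xs" and n: "length xs \<ge> 3" and dL: "distinct L" and sL: "set L = set xs"
    and p: "path_adj xs L"
  shows "circ_class L = circ_class xs"
proof -
  have ne: "L \<noteq> []" using sL n by auto
  obtain ys where ys: "ys \<in> circ_class xs" "take (length L) ys = L" using normalize[OF d n dL _ ne p] sL by blast
  have "length L = length xs" using distinct_card[OF dL] distinct_card[OF d] sL by simp
  moreover have "length ys = length xs" using ys(1) cc_mem by blast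
  ultimately have "ys = L" using ys(2) by simp
  then show ?thesis using ys(1) cc_eq by blast
qed

lemma degree_list:
  assumes d: "distinct xs" and n: "length xs \<ge> 3" and u: "u \<in> set xs"
  shows "card {v. adjacent_list xs u v} = 2"
proof -
  let ?n = "length xs"
  obtain t where t: "t < ?n" "xs!t = u" using u by (metis in_set_conv_nth)
  have "{v. adjacent_list xs u v} = {xs ! ((t+1) mod ?n), xs ! ((t + ?n - 1) mod ?n)}"
    using adj_nth_iff[OF d n t(1)] t(2) by auto
  moreover have "xs ! ((t+1) mod ?n) \<noteq> xs ! ((t + ?n - 1) mod ?n)"
  proof
    assume "xs ! ((t+1) mod ?n) = xs ! ((t + ?n - 1) mod ?n)"
    moreover have n0: "0 < ?n" using t by linarith
    moreover have "(t+1) mod ?n < ?n" "(t + ?n - 1) mod ?n < ?n" using mod_less_divisor[OF n0] by auto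
    ultimately have e: "(t+1) mod ?n = (t + ?n - 1) mod ?n" using d nth_eq_iff_index_eq by blast
    have "((t+1) mod ?n + 1) mod ?n = ((t + ?n - 1) mod ?n + 1) mod ?n" using e by simp
    also have "... = t" using mod_pred_succ n t by simp
    finally have "(t + 2) mod ?n = t" by (simp add: mod_simps)
    show False
    proof (cases "t + 2 < ?n")
      case True
      then show False using \<open>(t + 2) mod ?n = t\<close> by simp
    next
      case False
      then have "(t + 2) mod ?n = (t + 2 - ?n) mod ?n" by (simp add: le_mod_geq)
      moreover have "t + 2 - ?n < ?n" using t n by linarith
      ultimately have "t + 2 - ?n = t" using \<open>(t + 2) mod ?n = t\<close> by simp
      then show False using n False by linarith
    qed
  qed
  ultimately show ?thesis by simp
qed



definition rest :: "'a list list \<Rightarrow> nat \<Rightarrow> nat \<Rightarrow> 'a list list" where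
  "rest D k l = [D ! t. t \<leftarrow> [0..<length D], t \<noteq> k, t \<noteq> l]"

definition joinD :: "'a list list \<Rightarrow> nat \<Rightarrow> nat \<Rightarrow> 'a list \<Rightarrow> 'a list \<Rightarrow> 'a list list" where
  "joinD D k l x y = (x @ y) # rest D k l"

lemma comp_filter: "[f t. t \<leftarrow> xs, P t, Q t] = map f (filter (\<lambda>t. P t \<and> Q t) xs)"
  by (induct xs) auto

lemma rest_map: "rest D k l = map ((!) D) (filter (\<lambda>t. t \<noteq> k \<and> t \<noteq> l) [0..<length D])"
  unfolding rest_def by (rule comp_filter)

lemma set_filter_upt: "set (filter (\<lambda>t. t \<noteq> k \<and> t \<noteq> l) [0..<p]) = {0..<p} - {k, l}"
  by auto

lemma sum_list_rest:
  fixes f :: "'a list \<Rightarrow> 'b::comm_monoid_add"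
  assumes "k < length D" "l < length D" "k \<noteq> l"
  shows "sum_list (map f (rest D k l)) + f (D!k) + f (D!l) = sum_list (map f D)"
proof -
  let ?p = "length D"
  have "sum_list (map f (rest D k l)) = sum_list (map (f \<circ> (!) D) (filter (\<lambda>t. t \<noteq> k \<and> t \<noteq> l) [0..<?p]))"
    unfolding rest_map by simp
  also have "... = sum (f \<circ> (!) D) ({0..<?p} - {k, l})"
    by (subst sum_list_distinct_conv_sum_set) (simp_all only: set_filter_upt distinct_filter distinct_upt)
  finally have A: "sum_list (map f (rest D k l)) = sum (f \<circ> (!) D) ({0..<?p} - {k, l})" .
  have "sum_list (map f D) = sum_list (map (f \<circ> (!) D) [0..<?p])"
    by (metis map_map map_nth)
  also have "... = sum (f \<circ> (!) D) {0..<?p}"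
    by (subst sum_list_distinct_conv_sum_set) auto
  finally have B: "sum_list (map f D) = sum (f \<circ> (!) D) {0..<?p}" .
  have "sum (f \<circ> (!) D) {0..<?p} = sum (f \<circ> (!) D) ({0..<?p} - {k, l}) + f (D!k) + f (D!l)"
  proof -
    have "{0..<?p} = insert k (insert l ({0..<?p} - {k, l}))" using assms by auto
    then have "sum (f \<circ> (!) D) {0..<?p} = sum (f \<circ> (!) D) (insert k (insert l ({0..<?p} - {k, l})))" by simp
    also have "... = f (D!k) + (f (D!l) + sum (f \<circ> (!) D) ({0..<?p} - {k, l}))"
      using assms by (simp add: sum.insert)
    finally show ?thesis by (simp add: ac_simps)
  qed
  then show ?thesis using A B by simp
qed

lemma length_rest: "k < length D \<Longrightarrow> l < length D \<Longrightarrow> k \<noteq> l \<Longrightarrow> length (rest D k l) = length D - 2"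
  using sum_list_rest[of k D l "\<lambda>_. 1::nat"] by (simp add: sum_list_triv)

lemma set_rest: "set (rest D k l) = (!) D ` ({0..<length D} - {k, l})"
  unfolding rest_map by auto

lemma pco_props:
  assumes "partial_circ_ordering X D"
  shows "\<forall>b\<in>set D. b \<noteq> []" "distinct (concat D)" "set (concat D) = X"
    "\<And>b. b \<in> set D \<Longrightarrow> distinct b" "\<And>b b'. b \<in> set D \<Longrightarrow> b' \<in> set D \<Longrightarrow> b \<noteq> b' \<Longrightarrow> set b \<inter> set b' = {}"
    "distinct D" "finite X"
proof -
  show 1: "\<forall>b\<in>set D. b \<noteq> []" "distinct (concat D)" "set (concat D) = X"
    using assms unfolding partial_circ_ordering_def by auto
  then show "\<And>b. b \<in> set D \<Longrightarrow> distinct b" "\<And>b b'. b \<in> set D \<Longrightarrow> b' \<in> set D \<Longrightarrow> b \<noteq> b' \<Longrightarrow> set b \<inter> set b' = {}"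
    by (auto simp: distinct_concat_iff)
  have "removeAll [] D = D" using 1(1) by (induct D) auto
  then show "distinct D" using 1(2) by (metis distinct_concat_iff)
  show "finite X" using 1(3) by (metis finite_set)
qed

lemma consec_sym: "consec_in_block b u v = consec_in_block b v u"
  unfolding consec_in_block_def by (auto simp: insert_commute)

lemma consec_mem: "consec_in_block b u v \<Longrightarrow> u \<in> set b \<and> v \<in> set b"
  unfolding consec_in_block_def by (auto simp: doubleton_eq_iff)

lemma consec_rev_imp: "consec_in_block (rev b) u v \<Longrightarrow> consec_in_block b u v"
proof -
  assume "consec_in_block (rev b) u v"
  then obtain i where i: "Suc i < length b" "{rev b ! i, rev b ! Suc i} = {u, v}"
    unfolding consec_in_block_def by auto
  let ?n = "length b"
  have r1: "rev b ! i = b ! (?n - Suc i)" using i(1) by (simp add: rev_nth)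
  have r2: "rev b ! Suc i = b ! (?n - Suc (Suc i))" using i(1) by (simp add: rev_nth)
  have e: "?n - Suc i = Suc (?n - Suc (Suc i))" using i(1) by linarith
  have lt: "Suc (?n - Suc (Suc i)) < ?n" using i(1) by linarith
  have "{b ! (?n - Suc (Suc i)), b ! Suc (?n - Suc (Suc i))} = {u, v}"
    using i(2) unfolding r1 r2 e by (simp add: insert_commute)
  then show ?thesis unfolding consec_in_block_def using lt by blast
qed

lemma consec_rev[simp]: "consec_in_block (rev b) = consec_in_block b"
proof (intro ext iffI)
  fix u v
  show "consec_in_block (rev b) u v \<Longrightarrow> consec_in_block b u v" by (rule consec_rev_imp)
  assume "consec_in_block b u v"
  then have "consec_in_block (rev (rev b)) u v" by simp
  then show "consec_in_block (rev b) u v" by (rule consec_rev_imp)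
qed

lemma consec_append:
  assumes "x \<noteq> []" "y \<noteq> []"
  shows "consec_in_block (x @ y) u v \<longleftrightarrow> consec_in_block x u v \<or> consec_in_block y u v \<or> {u, v} = {last x, hd y}"
proof
  assume "consec_in_block (x @ y) u v"
  then obtain i where i: "Suc i < length (x @ y)" "{(x@y) ! i, (x@y) ! Suc i} = {u, v}"
    unfolding consec_in_block_def by auto
  consider "Suc i < length x" | "Suc i = length x" | "length x \<le> i" by linarith
  then show "consec_in_block x u v \<or> consec_in_block y u v \<or> {u, v} = {last x, hd y}"
  proof cases
    case 1
    then have "{x ! i, x ! Suc i} = {u, v}" using i by (simp add: nth_append)
    then show ?thesis using 1 unfolding consec_in_block_def by blast
  next
    case 2
    then have ii: "i = length x - 1" by linarith
    then have "(x@y) ! i = last x" "(x@y) ! Suc i = hd y" using assms 2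
      by (auto simp: nth_append last_conv_nth hd_conv_nth)
    then show ?thesis using i by auto
  next
    case 3
    then have "{y ! (i - length x), y ! Suc (i - length x)} = {u, v}" using i
      by (simp add: nth_append Suc_diff_le)
    moreover have "Suc (i - length x) < length y" using i 3 by simp
    ultimately show ?thesis unfolding consec_in_block_def by blast
  qed
next
  assume "consec_in_block x u v \<or> consec_in_block y u v \<or> {u, v} = {last x, hd y}"
  then show "consec_in_block (x @ y) u v"
  proof (elim disjE)
    assume "consec_in_block x u v"
    then obtain i where i: "Suc i < length x" "{x ! i, x ! Suc i} = {u, v}" unfolding consec_in_block_def by auto
    then show ?thesis unfolding consec_in_block_def by (intro exI[of _ i]) (auto simp: nth_append)
  next
    assume "consec_in_block y u v"
    then obtain i where i: "Suc i < length y" "{y ! i, y ! Suc i} = {u, v}" unfolding consec_in_block_def by auto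
    then show ?thesis unfolding consec_in_block_def by (intro exI[of _ "length x + i"]) (auto simp: nth_append)
  next
    assume h: "{u, v} = {last x, hd y}"
    have "(x@y) ! (length x - 1) = last x" "(x@y) ! Suc (length x - 1) = hd y" using assms
      by (auto simp: nth_append last_conv_nth hd_conv_nth)
    moreover have "Suc (length x - 1) < length (x @ y)" using assms by simp
    ultimately show ?thesis unfolding consec_in_block_def using h by metis
  qed
qed



definition ind :: "'a list \<Rightarrow> nat" where "ind b = (if 2 \<le> length b then 1 else 0)"
definition nb :: "'a list list \<Rightarrow> nat" where "nb D = sum_list (map ind D)"

lemma orient_facts:
  assumes "x \<in> {b, rev b}"
  shows "set x = set b" "mset x = mset b" "length x = length b" "consec_in_block x = consec_in_block b"
    "(x = []) = (b = [])" "ind x = ind b"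
  using assms by (auto simp: ind_def)

lemma consec_some_nth: "consec_in_some_block D u v \<longleftrightarrow> (\<exists>t<length D. consec_in_block (D!t) u v)"
  unfolding consec_in_some_block_def by (metis in_set_conv_nth)

lemma adj_circ_sym: "adjacent_circ c u v = adjacent_circ c v u"
  unfolding adjacent_circ_def using adj_list_sym by metis

context
  fixes X :: "'a set" and D :: "'a list list" and k l :: nat and x y :: "'a list"
  assumes pco: "partial_circ_ordering X D"
    and kl: "k < length D" "l < length D" "k \<noteq> l"
    and x: "x \<in> {D!k, rev (D!k)}" and y: "y \<in> {D!l, rev (D!l)}"
begin

lemma xy_ne: "x \<noteq> []" "y \<noteq> []"
  using orient_facts(5)[OF x] orient_facts(5)[OF y] pco_props(1)[OF pco] kl by auto

lemma join_pco: "partial_circ_ordering X (joinD D k l x y)"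
proof -
  have ms: "mset (concat (joinD D k l x y)) = mset (concat D)"
    unfolding joinD_def mset_concat
    using sum_list_rest[OF kl, of mset] orient_facts(2)[OF x] orient_facts(2)[OF y]
    by (simp add: ac_simps)
  have ne: "\<forall>b\<in>set (joinD D k l x y). b \<noteq> []"
    using pco_props(1)[OF pco] xy_ne kl by (auto simp: joinD_def set_rest)
  show ?thesis unfolding partial_circ_ordering_def
    using ne ms pco_props(2,3)[OF pco] mset_eq_imp_distinct_iff mset_eq_setD by metis
qed

lemma join_length: "length (joinD D k l x y) = length D - 1"
  unfolding joinD_def using length_rest[OF kl] kl by simp

lemma join_set: "set (joinD D k l x y) = insert (x @ y) ((!) D ` ({0..<length D} - {k, l}))"
  by (simp add: joinD_def set_rest)

lemma join_nb: "nb (joinD D k l x y) + ind (D!k) + ind (D!l) = nb D + 1"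
proof -
  have "length x > 0" "length y > 0" using xy_ne by auto
  then have "2 \<le> length x + length y" by linarith
  then have "ind (x @ y) = 1" unfolding ind_def by simp
  then show ?thesis unfolding nb_def joinD_def using sum_list_rest[OF kl, of ind] by simp
qed

lemma join_consec: "consec_in_some_block (joinD D k l x y) u v \<longleftrightarrow>
    consec_in_some_block D u v \<or> {u, v} = {last x, hd y}"
proof -
  have "consec_in_some_block (joinD D k l x y) u v \<longleftrightarrow>
        consec_in_block (x @ y) u v \<or> (\<exists>t\<in>{0..<length D} - {k, l}. consec_in_block (D!t) u v)"
    unfolding consec_in_some_block_def join_set by auto
  also have "... \<longleftrightarrow> consec_in_block (D!k) u v \<or> consec_in_block (D!l) u v \<or> {u, v} = {last x, hd y}
      \<or> (\<exists>t\<in>{0..<length D} - {k, l}. consec_in_block (D!t) u v)"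
    using consec_append[OF xy_ne] orient_facts(4)[OF x] orient_facts(4)[OF y] by auto
  also have "... \<longleftrightarrow> consec_in_some_block D u v \<or> {u, v} = {last x, hd y}"
    unfolding consec_some_nth using kl by auto
  finally show ?thesis .
qed

lemma join_o: "consistent_orderings X (joinD D k l x y) =
   {c \<in> consistent_orderings X D. adjacent_circ c (last x) (hd y)}"
proof -
  have "(\<forall>u v. {u, v} = {last x, hd y} \<longrightarrow> adjacent_circ c u v) \<longleftrightarrow> adjacent_circ c (last x) (hd y)" for c
  proof
    assume "\<forall>u v. {u, v} = {last x, hd y} \<longrightarrow> adjacent_circ c u v"
    then show "adjacent_circ c (last x) (hd y)" by blast
  next
    assume a: "adjacent_circ c (last x) (hd y)"
    then have b: "adjacent_circ c (hd y) (last x)" using adj_circ_sym by metis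
    show "\<forall>u v. {u, v} = {last x, hd y} \<longrightarrow> adjacent_circ c u v"
      using a b by (auto simp: doubleton_eq_iff)
  qed
  then show ?thesis unfolding consistent_orderings_def join_consec by blast
qed

end



lemma circ_rep: "c \<in> circ_orderings X \<Longrightarrow> \<exists>xs. c = circ_class xs \<and> distinct xs \<and> set xs = X"
  unfolding circ_orderings_def by auto

lemma circ_rep_len: "c \<in> circ_orderings X \<Longrightarrow> \<exists>xs. c = circ_class xs \<and> distinct xs \<and> set xs = X \<and> length xs = card X"
  using circ_rep distinct_card by metis

lemma o_sub: "consistent_orderings X D \<subseteq> circ_orderings X"
  unfolding consistent_orderings_def by auto

lemma o_consec: "c \<in> consistent_orderings X D \<Longrightarrow> consec_in_some_block D u v \<Longrightarrow> adjacent_circ c u v"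
  unfolding consistent_orderings_def by auto

lemma block_path:
  assumes "c \<in> consistent_orderings X D" "c = circ_class xs" "b \<in> set D"
  shows "path_adj xs b"
  unfolding path_adj_def
proof (intro allI impI)
  fix t assume "Suc t < length b"
  then have "consec_in_block b (b!t) (b!Suc t)" unfolding consec_in_block_def by blast
  then have "adjacent_circ c (b!t) (b!Suc t)" using o_consec[OF assms(1)] assms(3) unfolding consec_in_some_block_def by blast
  then show "adjacent_list xs (b!t) (b!Suc t)" using assms adj_circ_class by metis
qed

lemma degree_c:
  assumes "c \<in> circ_orderings X" "card X \<ge> 3" "u \<in> X"
  shows "card {v. adjacent_circ c u v} = 2"
proof -
  obtain xs where xs: "c = circ_class xs" "distinct xs" "set xs = X" "length xs = card X" using circ_rep_len assms(1) by blast
  show ?thesis unfolding xs(1) adj_circ_class using degree_list[of xs u] xs assms by simp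
qed

lemma interior:
  assumes "u \<in> set b" "u \<notin> endpoints b"
  shows "\<exists>t. 0 < t \<and> Suc t < length b \<and> b!t = u"
proof -
  obtain t where t: "t < length b" "b!t = u" using assms(1) by (metis in_set_conv_nth)
  have ne: "b \<noteq> []" using assms(1) by auto
  have "t \<noteq> 0"
  proof
    assume "t = 0" then have "u = hd b" using t ne by (simp add: hd_conv_nth)
    then show False using assms(2) ne unfolding endpoints_def by simp
  qed
  moreover have "t \<noteq> length b - 1"
  proof
    assume "t = length b - 1" then have "u = last b" using t ne by (simp add: last_conv_nth)
    then show False using assms(2) ne unfolding endpoints_def by simp
  qed
  ultimately show ?thesis using t by (intro exI[of _ t]) auto
qed

lemma interior_no_adj:
  assumes pco: "partial_circ_ordering X D" and n3: "card X \<ge> 3" and c: "c \<in> consistent_orderings X D"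
    and b: "b \<in> set D" and t: "0 < t" "Suc t < length b" and w: "w \<notin> set b"
    and adj: "adjacent_circ c (b!t) w"
  shows False
proof -
  have db: "distinct b" using pco_props(4)[OF pco b] .
  have cX: "c \<in> circ_orderings X" using c o_sub by blast
  have uX: "b!t \<in> X" using b t pco_props(3)[OF pco] by auto
  have deg: "card {v. adjacent_circ c (b!t) v} = 2" using degree_c[OF cX n3 uX] .
  then have fin: "finite {v. adjacent_circ c (b!t) v}" by (metis card.infinite zero_neq_numeral)
  have c1: "consec_in_block b (b!(t-1)) (b!t)" unfolding consec_in_block_def using t
    by (intro exI[of _ "t-1"]) auto
  have c2: "consec_in_block b (b!t) (b!Suc t)" unfolding consec_in_block_def using t by blast
  have a1: "adjacent_circ c (b!t) (b!(t-1))" using o_consec[OF c] c1 b adj_circ_sym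
    unfolding consec_in_some_block_def by metis
  have a2: "adjacent_circ c (b!t) (b!Suc t)" using o_consec[OF c] c2 b
    unfolding consec_in_some_block_def by metis
  have "{b!(t-1), b!Suc t, w} \<subseteq> {v. adjacent_circ c (b!t) v}" using a1 a2 adj by auto
  then have le: "card {b!(t-1), b!Suc t, w} \<le> 2" using card_mono[OF fin] deg by metis
  have ne1: "b!(t-1) \<noteq> b!Suc t" using db t nth_eq_iff_index_eq by fastforce
  have ne2: "b!(t-1) \<noteq> w" "b!Suc t \<noteq> w" using w t by auto
  have "card {b!(t-1), b!Suc t, w} = 3" using ne1 ne2 by simp
  then show False using le by simp
qed

lemma block_lt:
  assumes pco: "partial_circ_ordering X D" and D2: "2 \<le> length D" and b: "b \<in> set D"
  shows "length b < card X"
proof -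
  have "card (set D) = length D" using distinct_card[OF pco_props(6)[OF pco]] .
  then have "card (set D) \<noteq> 1" using D2 by linarith
  then have "set D \<noteq> {b}" by force
  then obtain b' where b': "b' \<in> set D" "b' \<noteq> b" using b by blast
  have "b' \<noteq> []" using pco_props(1)[OF pco] b'(1) by blast
  then obtain w where w: "w \<in> set b'" by (cases b') auto
  have "set b' \<inter> set b = {}" using pco_props(5)[OF pco b'(1) b b'(2)] .
  then have "w \<notin> set b" using w by blast
  moreover have "w \<in> X" "set b \<subseteq> X" using w b'(1) b pco_props(3)[OF pco] by auto
  ultimately have "set b \<subset> X" by blast
  then have "card (set b) < card X" using psubset_card_mono pco_props(7)[OF pco] by blast
  moreover have "card (set b) = length b" using distinct_card[OF pco_props(4)[OF pco b]] .
  ultimately show ?thesis by simp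
qed

lemma Adj:
  assumes pco: "partial_circ_ordering X D" and n3: "card X \<ge> 3" and D2: "2 \<le> length D"
    and c: "c \<in> consistent_orderings X D"
    and b1: "b1 \<in> set D" and b2: "b2 \<in> set D" and u: "u \<in> set b1" and v: "v \<in> set b2"
    and adj: "adjacent_circ c u v"
  shows "(b1 = b2 \<and> consec_in_block b1 u v) \<or> (b1 \<noteq> b2 \<and> u \<in> endpoints b1 \<and> v \<in> endpoints b2)"
proof (cases "b1 = b2")
  case True
  have cX: "c \<in> circ_orderings X" using c o_sub by blast
  obtain xs where xs: "c = circ_class xs" "distinct xs" "set xs = X" "length xs = card X"
    using circ_rep_len[OF cX] by blast
  have "consec_in_block b1 u v"
  proof (rule path_in_cycle[of xs b1 u v])
    show "distinct xs" "3 \<le> length xs" using xs n3 by auto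
    show "distinct b1" using pco_props(4)[OF pco b1] .
    show "set b1 \<subseteq> set xs" using xs(3) b1 pco_props(3)[OF pco] by auto
    show "path_adj xs b1" using block_path[OF c xs(1) b1] .
    show "length b1 < length xs" using block_lt[OF pco D2 b1] xs by simp
    show "u \<in> set b1" "v \<in> set b1" using u v True by auto
    show "adjacent_list xs u v" using adj xs(1) adj_circ_class by metis
  qed
  then show ?thesis using True by blast
next
  case False
  have disj: "set b1 \<inter> set b2 = {}" using pco_props(5)[OF pco b1 b2 False] .
  have "u \<in> endpoints b1"
  proof (rule ccontr)
    assume nu: "u \<notin> endpoints b1"
    obtain t where t: "0 < t" "Suc t < length b1" "b1!t = u" using interior[OF u nu] by blast
    show False using interior_no_adj[OF pco n3 c b1 t(1,2), of v] disj v adj t(3) by blast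
  qed
  moreover have "v \<in> endpoints b2"
  proof (rule ccontr)
    assume nv: "v \<notin> endpoints b2"
    obtain t where t: "0 < t" "Suc t < length b2" "b2!t = v" using interior[OF v nv] by blast
    have "adjacent_circ c v u" using adj adj_circ_sym by metis
    then show False using interior_no_adj[OF pco n3 c b2 t(1,2), of u] disj u t(3) by blast
  qed
  ultimately show ?thesis using False by blast
qed



lemma finite_circ: "finite X \<Longrightarrow> finite (circ_orderings X)"
proof -
  assume f: "finite X"
  have "{xs. distinct xs \<and> set xs = X} \<subseteq> {xs. set xs \<subseteq> X \<and> length xs = card X}"
    using distinct_card by fastforce
  moreover have "finite {xs. set xs \<subseteq> X \<and> length xs = card X}" using finite_lists_length_eq[OF f] .
  ultimately have "finite {xs. distinct xs \<and> set xs = X}" by (rule finite_subset)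
  then show ?thesis unfolding circ_orderings_def by (rule finite_imageI)
qed

lemma finite_o: "finite X \<Longrightarrow> finite (consistent_orderings X D)"
  using finite_circ o_sub finite_subset by metis

lemma endpoints_card:
  assumes "b \<noteq> []" "distinct b"
  shows "card (endpoints b) = 2 ^ ind b"
proof (cases "length b = 1")
  case True
  then have "hd b = last b" using assms by (cases b) auto
  then show ?thesis using True assms unfolding endpoints_def ind_def by simp
next
  case False
  have "length b \<noteq> 0" using assms(1) by simp
  then have l2: "2 \<le> length b" using False by linarith
  have "hd b = b!0" "last b = b!(length b - 1)" using assms(1) by (auto simp: hd_conv_nth last_conv_nth)
  moreover have "b!0 \<noteq> b!(length b - 1)" using assms(2) l2 nth_eq_iff_index_eq by fastforce
  ultimately have "hd b \<noteq> last b" by simp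
  then show ?thesis using l2 assms unfolding endpoints_def ind_def by simp
qed

lemma endpoints_sub: "endpoints b \<subseteq> set b"
  unfolding endpoints_def by auto

lemma consec_last:
  assumes "distinct P" "consec_in_block P (last P) v"
  shows "2 \<le> length P \<and> v = P ! (length P - 2)"
proof -
  obtain k where k: "Suc k < length P" "{P!k, P!Suc k} = {last P, v}" using assms(2) unfolding consec_in_block_def by blast
  have ne: "P \<noteq> []" using k by auto
  have lst: "last P = P!(length P - 1)" using ne by (simp add: last_conv_nth)
  have "P!k \<noteq> last P"
  proof
    assume "P!k = last P"
    then have "k = length P - 1" using lst assms(1) k(1) nth_eq_iff_index_eq by fastforce
    then show False using k(1) by simp
  qed
  then have "P!Suc k = last P" "P!k = v" using k(2) by (auto simp: doubleton_eq_iff)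
  then have "Suc k = length P - 1" using lst assms(1) k(1) nth_eq_iff_index_eq by fastforce
  then have "length P - 2 = k" "2 \<le> length P" using k(1) by linarith+
  then show ?thesis using \<open>P!k = v\<close> by simp
qed

lemma adj_in_X: "c \<in> circ_orderings X \<Longrightarrow> adjacent_circ c u v \<Longrightarrow> u \<in> X \<and> v \<in> X"
proof -
  assume c: "c \<in> circ_orderings X" and a: "adjacent_circ c u v"
  obtain xs where xs: "c = circ_class xs" "distinct xs" "set xs = X" using circ_rep[OF c] by blast
  have "adjacent_list xs u v" using a xs(1) adj_circ_class by metis
  then obtain k where k: "k < length xs" "{xs!k, xs!((k+1) mod length xs)} = {u, v}" unfolding adjacent_list_def by blast
  have "0 < length xs" using k(1) by linarith
  then have "(k+1) mod length xs < length xs" by (rule mod_less_divisor)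
  then have "xs!k \<in> set xs" "xs!((k+1) mod length xs) \<in> set xs" using k(1) by auto
  then show ?thesis using k(2) xs(3) by (auto simp: doubleton_eq_iff)
qed

lemma nth_block_neq: "partial_circ_ordering X D \<Longrightarrow> q < length D \<Longrightarrow> q' < length D \<Longrightarrow> q \<noteq> q' \<Longrightarrow> D!q \<noteq> D!q'"
proof -
  assume a: "partial_circ_ordering X D" "q < length D" "q' < length D" "q \<noteq> q'"
  have "distinct D" using pco_props(6)[OF a(1)] .
  then show ?thesis using a(2-4) nth_eq_iff_index_eq by blast
qed

lemma in_some_block: "partial_circ_ordering X D \<Longrightarrow> v \<in> X \<Longrightarrow> \<exists>q<length D. v \<in> set (D!q)"
proof -
  assume a: "partial_circ_ordering X D" "v \<in> X"
  then have "v \<in> set (concat D)" using pco_props(3)[OF a(1)] by simp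
  then obtain b where b: "b \<in> set D" "v \<in> set b" by auto
  then obtain q where "q < length D" "D!q = b" by (metis in_set_conv_nth)
  then show ?thesis using b by blast
qed

lemma outer_nbrs:
  assumes pco: "partial_circ_ordering X D" and n3: "card X \<ge> 3" and D2: "2 \<le> length D"
    and c: "c \<in> consistent_orderings X D"
  shows "card {y \<in> {y. \<exists>q. 0 < q \<and> q < length D \<and> y \<in> endpoints (D!q)}. adjacent_circ c (last (D!0)) y}
         = (if 2 \<le> length (D!0) then 1 else 2)"
proof -
  define P where "P = D!0"
  define E where "E = {y. \<exists>q. 0 < q \<and> q < length D \<and> y \<in> endpoints (D!q)}"
  have "0 < length D" using D2 by linarith
  then have P: "P \<in> set D" unfolding P_def by (rule nth_mem)
  have Dne: "D \<noteq> []" using \<open>0 < length D\<close> by auto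
  have Pne: "P \<noteq> []" using pco_props(1)[OF pco] P by blast
  have dP: "distinct P" using pco_props(4)[OF pco P] .
  define a where "a = last P"
  have aP: "a \<in> set P" unfolding a_def using Pne by simp
  have aX: "a \<in> X" using aP P pco_props(3)[OF pco] by auto
  have cX: "c \<in> circ_orderings X" using c o_sub by blast
  define N where "N = {v. adjacent_circ c a v}"
  have cN: "card N = 2" unfolding N_def using degree_c[OF cX n3 aX] .
  then have fN: "finite N" by (metis card.infinite zero_neq_numeral)
  have A: "{y \<in> E. adjacent_circ c a y} = N - set P"
  proof
    show "{y \<in> E. adjacent_circ c a y} \<subseteq> N - set P"
    proof
      fix y assume y: "y \<in> {y \<in> E. adjacent_circ c a y}"
      then obtain q where q: "0 < q" "q < length D" "y \<in> endpoints (D!q)" unfolding E_def by blast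
      have "D!q \<noteq> P" unfolding P_def using nth_block_neq[OF pco q(2), of 0] q(1) Dne by simp
      then have "set (D!q) \<inter> set P = {}" using pco_props(5)[OF pco _ P] q(2) by simp
      moreover have "y \<in> set (D!q)" using endpoints_sub[of "D!q"] q(3) by blast
      ultimately have "y \<notin> set P" by blast
      then show "y \<in> N - set P" using y unfolding N_def by blast
    qed
  next
    show "N - set P \<subseteq> {y \<in> E. adjacent_circ c a y}"
    proof
      fix v assume v: "v \<in> N - set P"
      then have adj: "adjacent_circ c a v" unfolding N_def by blast
      then have "v \<in> X" using adj_in_X[OF cX] by blast
      then obtain q where q: "q < length D" "v \<in> set (D!q)" using in_some_block[OF pco] by blast
      have q0: "q \<noteq> 0"
      proof
        assume "q = 0" then have "v \<in> set P" using q(2) unfolding P_def by simp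
        then show False using v by blast
      qed
      have "D!q \<noteq> P" unfolding P_def using nth_block_neq[OF pco q(1), of 0] q0 Dne by simp
      then have "v \<in> endpoints (D!q)" using Adj[OF pco n3 D2 c P _ aP q(2) adj] q(1) by auto
      then show "v \<in> {y \<in> E. adjacent_circ c a y}" unfolding E_def using q q0 adj by blast
    qed
  qed
  have B: "N \<inter> set P = (if 2 \<le> length P then {P!(length P - 2)} else {})"
  proof
    show "N \<inter> set P \<subseteq> (if 2 \<le> length P then {P!(length P - 2)} else {})"
    proof
      fix v assume v: "v \<in> N \<inter> set P"
      then have "consec_in_block P a v" using Adj[OF pco n3 D2 c P P aP] unfolding N_def by blast
      then show "v \<in> (if 2 \<le> length P then {P!(length P - 2)} else {})"
        using consec_last[OF dP] unfolding a_def by auto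
    qed
  next
    show "(if 2 \<le> length P then {P!(length P - 2)} else {}) \<subseteq> N \<inter> set P"
    proof (cases "2 \<le> length P")
      case True
      have e: "Suc (length P - 2) = length P - 1" "Suc (length P - 2) < length P" using True by linarith+
      have "consec_in_block P (P!(length P - 2)) (P!Suc (length P - 2))"
        unfolding consec_in_block_def using e(2) by blast
      then have "consec_in_block P (P!(length P - 2)) a"
        unfolding a_def e(1) using Pne by (simp add: last_conv_nth)
      then have "adjacent_circ c (P!(length P - 2)) a" using o_consec[OF c] P unfolding consec_in_some_block_def by blast
      then have "adjacent_circ c a (P!(length P - 2))" using adj_circ_sym by metis
      moreover have "P!(length P - 2) \<in> set P" using True by simp
      ultimately show ?thesis using True unfolding N_def by simp
    qed simp
  qed
  have "card (N - set P) = card N - card (N \<inter> set P)"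
    by (rule card_Diff_subset_Int) (use fN in simp)
  then have "card (N - set P) = (if 2 \<le> length P then 1 else 2)" using B cN by simp
  then show ?thesis using A unfolding E_def a_def P_def by simp
qed



lemma card_filter_ind: "finite A \<Longrightarrow> card {x\<in>A. P x} = (\<Sum>x\<in>A. if P x then 1 else 0)"
proof -
  assume f: "finite A"
  have "{x\<in>A. P x} = A \<inter> Collect P" by blast
  then show ?thesis using f by (simp add: sum.If_cases)
qed

lemma sum_card_swap:
  assumes "finite A" "finite B"
  shows "(\<Sum>y\<in>B. card {x\<in>A. R x y}) = (\<Sum>x\<in>A. card {y\<in>B. R x y})"
proof -
  have "(\<Sum>y\<in>B. card {x\<in>A. R x y}) = (\<Sum>y\<in>B. \<Sum>x\<in>A. if R x y then 1 else 0)"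
    using card_filter_ind[OF assms(1)] by simp
  also have "... = (\<Sum>x\<in>A. \<Sum>y\<in>B. if R x y then 1 else 0)" by (rule sum.swap)
  also have "... = (\<Sum>x\<in>A. card {y\<in>B. R x y})"
    using card_filter_ind[OF assms(2)] by simp
  finally show ?thesis .
qed

lemma base_count:
  assumes pco: "partial_circ_ordering X D" and n3: "card X \<ge> 3" and l1: "length D = 1"
  shows "card (consistent_orderings X D) = 1" "nb D = 1"
proof -
  obtain P where D: "D = [P]" using l1 by (cases D) auto
  have sP: "set P = X" using pco_props(3)[OF pco] D by simp
  have dP: "distinct P" using pco_props(4)[OF pco] D by simp
  have lP: "length P = card X" using dP sP distinct_card by metis
  have "consistent_orderings X D = {circ_class P}"
  proof
    show "consistent_orderings X D \<subseteq> {circ_class P}"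
    proof
      fix c assume c: "c \<in> consistent_orderings X D"
      then have cX: "c \<in> circ_orderings X" using o_sub by blast
      obtain xs where xs: "c = circ_class xs" "distinct xs" "set xs = X" "length xs = card X"
        using circ_rep_len[OF cX] by blast
      have "path_adj xs P" using block_path[OF c xs(1)] D by simp
      then have "circ_class P = circ_class xs" using base_cycle[OF xs(2) _ dP] xs n3 sP by simp
      then show "c \<in> {circ_class P}" using xs(1) by simp
    qed
  next
    have "circ_class P \<in> circ_orderings X" unfolding circ_orderings_def using dP sP by blast
    moreover have "adjacent_circ (circ_class P) u v" if "consec_in_some_block D u v" for u v
    proof -
      have "consec_in_block P u v" using that D unfolding consec_in_some_block_def by simp
      then obtain k where k: "Suc k < length P" "{P!k, P!Suc k} = {u, v}" unfolding consec_in_block_def by blast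
      have "(k+1) mod length P = Suc k" using k(1) by simp
      then have "adjacent_list P u v" unfolding adjacent_list_def using k by (intro exI[of _ k]) simp
      then show ?thesis using adj_circ_class by metis
    qed
    ultimately show "{circ_class P} \<subseteq> consistent_orderings X D" unfolding consistent_orderings_def by blast
  qed
  then show "card (consistent_orderings X D) = 1" by simp
  have "2 \<le> length P" using lP n3 by linarith
  then show "nb D = 1" unfolding nb_def ind_def D by simp
qed

lemma endpoints_hd_last: "b \<noteq> [] \<Longrightarrow> endpoints b = {hd b, last b}"
  unfolding endpoints_def by simp

lemma count_F:
  assumes "partial_circ_ordering X D" "card X \<ge> 3" "length D \<ge> 1"
  shows "2 * card (consistent_orderings X D) = fact (length D - 1) * 2 ^ nb D"
proof -
  have "\<forall>D. length D = Suc p \<longrightarrow> partial_circ_ordering X D \<longrightarrow>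
      2 * card (consistent_orderings X D) = fact p * 2 ^ nb D" for p
  proof (induction p)
    case 0
    show ?case
    proof (intro allI impI)
      fix D :: "'a list list" assume "length D = Suc 0" "partial_circ_ordering X D"
      then show "2 * card (consistent_orderings X D) = fact 0 * 2 ^ nb D"
        using base_count[of X D] assms(2) by simp
    qed
  next
    case (Suc p)
    show ?case
    proof (intro allI impI)
      fix D :: "'a list list"
      assume lD: "length D = Suc (Suc p)" and pco: "partial_circ_ordering X D"
      have n3: "card X \<ge> 3" using assms(2) .
      have D2: "2 \<le> length D" using lD by simp
      define P where "P = D!0"
      define a where "a = last P"
      define E where "E = {y. \<exists>q. 0 < q \<and> q < length D \<and> y \<in> endpoints (D!q)}"
      define Os where "Os = consistent_orderings X D"
      define mult :: nat where "mult = (if 2 \<le> length P then 1 else 2)"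
      have fX: "finite X" using pco_props(7)[OF pco] .
      have fO: "finite Os" unfolding Os_def using finite_o[OF fX] .
      have E_UN: "E = (\<Union>q\<in>{1..<length D}. endpoints (D!q))"
      proof (intro equalityI subsetI)
        fix y assume "y \<in> E"
        then obtain q where "0 < q" "q < length D" "y \<in> endpoints (D!q)" unfolding E_def by blast
        then show "y \<in> (\<Union>q\<in>{1..<length D}. endpoints (D!q))" by auto
      next
        fix y assume "y \<in> (\<Union>q\<in>{1..<length D}. endpoints (D!q))"
        then obtain q where "q \<in> {1..<length D}" "y \<in> endpoints (D!q)" by blast
        then have "0 < q" "q < length D" by auto
        then show "y \<in> E" unfolding E_def using \<open>y \<in> endpoints (D!q)\<close> by blast
      qed
      have fE: "finite E" unfolding E_UN endpoints_def by simp
      have "0 < length D" using D2 by linarith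
      then have P: "P \<in> set D" unfolding P_def by (rule nth_mem)
      have Pne: "P \<noteq> []" using pco_props(1)[OF pco] P by blast
      have sumA: "(\<Sum>y\<in>E. card {c\<in>Os. adjacent_circ c a y}) = card Os * mult"
      proof -
        have "(\<Sum>y\<in>E. card {c\<in>Os. adjacent_circ c a y}) = (\<Sum>c\<in>Os. card {y\<in>E. adjacent_circ c a y})"
          by (rule sum_card_swap[OF fO fE])
        also have "... = (\<Sum>c\<in>Os. mult)"
          using outer_nbrs[OF pco n3 D2] unfolding Os_def E_def mult_def a_def P_def by simp
        finally show ?thesis by simp
      qed
      define C :: nat where "C = fact p * 2 ^ (nb D + 1)"
      have termC: "2 * card {c\<in>Os. adjacent_circ c a y} * 2 ^ ind P * 2 ^ ind (D!q) = C"
        if q: "q \<in> {1..<length D}" and y: "y \<in> endpoints (D!q)" for q y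
      proof -
        have q': "0 < length D" "q < length D" "0 \<noteq> q" using q by auto
        define y' where "y' = (if y = hd (D!q) then D!q else rev (D!q))"
        have y'o: "y' \<in> {D!q, rev (D!q)}" unfolding y'_def by simp
        have Qne: "D!q \<noteq> []" using pco_props(1)[OF pco] q'(2) by simp
        have hy: "hd y' = y" using y endpoints_hd_last[OF Qne] Qne unfolding y'_def by (auto simp: hd_rev)
        have Po: "P \<in> {D!0, rev (D!0)}" unfolding P_def by simp
        define J where "J = joinD D 0 q P y'"
        have pJ: "partial_circ_ordering X J" unfolding J_def using join_pco[OF pco q' Po y'o] .
        have lJ: "length J = Suc p" unfolding J_def using join_length[OF pco q' Po y'o] lD by simp
        have oJ: "consistent_orderings X J = {c\<in>Os. adjacent_circ c a y}"
          unfolding J_def Os_def a_def using join_o[OF pco q' Po y'o] hy by simp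
        have nJ: "nb J + ind P + ind (D!q) = nb D + 1"
          using join_nb[OF pco q' Po y'o] unfolding J_def by (simp add: P_def)
        have IH: "2 * card (consistent_orderings X J) = fact p * 2 ^ nb J" using Suc.IH lJ pJ by blast
        have "2 ^ nb J * 2 ^ ind P * 2 ^ ind (D!q) = (2::nat) ^ (nb D + 1)"
          using nJ by (metis power_add)
        then show ?thesis unfolding C_def using IH oJ by (metis mult.assoc)
      qed
      have sumQ: "(\<Sum>y\<in>endpoints (D!q). 2 * card {c\<in>Os. adjacent_circ c a y} * 2 ^ ind P) = C"
        if q: "q \<in> {1..<length D}" for q
      proof -
        have Qne: "D!q \<noteq> []" using pco_props(1)[OF pco] q by simp
        have dQ: "distinct (D!q)" using pco_props(4)[OF pco] q by simp
        have "(\<Sum>y\<in>endpoints (D!q). 2 * card {c\<in>Os. adjacent_circ c a y} * 2 ^ ind P) * 2 ^ ind (D!q)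
            = (\<Sum>y\<in>endpoints (D!q). 2 * card {c\<in>Os. adjacent_circ c a y} * 2 ^ ind P * 2 ^ ind (D!q))"
          by (simp add: sum_distrib_right)
        also have "... = (\<Sum>y\<in>endpoints (D!q). C)" using termC q by simp
        also have "... = C * 2 ^ ind (D!q)" using endpoints_card[OF Qne dQ] by simp
        finally show ?thesis by simp
      qed
      have disj: "\<forall>q\<in>{1..<length D}. \<forall>q'\<in>{1..<length D}. q \<noteq> q' \<longrightarrow> endpoints (D!q) \<inter> endpoints (D!q') = {}"
      proof (intro ballI impI)
        fix q q' assume "q \<in> {1..<length D}" "q' \<in> {1..<length D}" "q \<noteq> q'"
        then have "D!q \<noteq> D!q'" "D!q \<in> set D" "D!q' \<in> set D" using nth_block_neq[OF pco] by auto
        then have "set (D!q) \<inter> set (D!q') = {}" using pco_props(5)[OF pco] by simp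
        then show "endpoints (D!q) \<inter> endpoints (D!q') = {}" using endpoints_sub[of "D!q"] endpoints_sub[of "D!q'"] by blast
      qed
      have "(\<Sum>y\<in>E. 2 * card {c\<in>Os. adjacent_circ c a y} * 2 ^ ind P)
          = (\<Sum>q\<in>{1..<length D}. \<Sum>y\<in>endpoints (D!q). 2 * card {c\<in>Os. adjacent_circ c a y} * 2 ^ ind P)"
        unfolding E_UN
      proof (rule sum.UNION_disjoint)
        show "finite {1..<length D}" by simp
        show "\<forall>q\<in>{1..<length D}. finite (endpoints (D!q))" unfolding endpoints_def by simp
        show "\<forall>q\<in>{1..<length D}. \<forall>q'\<in>{1..<length D}. q \<noteq> q' \<longrightarrow> endpoints (D!q) \<inter> endpoints (D!q') = {}"
          using disj .
      qed
      also have "... = (\<Sum>q\<in>{1..<length D}. C)" using sumQ by simp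
      also have "... = Suc p * C" using lD by simp
      finally have S: "(\<Sum>y\<in>E. 2 * card {c\<in>Os. adjacent_circ c a y} * 2 ^ ind P) = Suc p * C" .
      have "(\<Sum>y\<in>E. 2 * card {c\<in>Os. adjacent_circ c a y} * 2 ^ ind P)
          = 2 * 2 ^ ind P * (\<Sum>y\<in>E. card {c\<in>Os. adjacent_circ c a y})"
        by (simp add: sum_distrib_left sum_distrib_right ac_simps)
      also have "... = 2 * (2 ^ ind P * mult) * card Os" using sumA by simp
      also have "2 ^ ind P * mult = 2" unfolding mult_def ind_def by simp
      finally have "4 * card Os = Suc p * C" using S by simp
      moreover have "Suc p * C = 2 * (fact (Suc p) * 2 ^ nb D)" unfolding C_def by (simp add: algebra_simps)
      ultimately have "4 * card Os = 2 * (fact (Suc p) * 2 ^ nb D)" by simp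
      then show "2 * card (consistent_orderings X D) = fact (Suc p) * 2 ^ nb D" unfolding Os_def by simp
    qed
  qed
  moreover obtain p where "length D = Suc p" using assms(3) by (cases "length D") auto
  ultimately show ?thesis using assms(1) by simp
qed



definition wt :: "'a list \<Rightarrow> 'a \<Rightarrow> real" where
  "wt b i = (if length b = 1 then 1 else if i = hd b \<or> i = last b then 1/2 else 0)"

lemma same_block: "partial_circ_ordering X D \<Longrightarrow> b \<in> set D \<Longrightarrow> b' \<in> set D \<Longrightarrow> i \<in> set b \<Longrightarrow> i \<in> set b' \<Longrightarrow> b' = b"
  using pco_props(5) by blast

lemma tsp_weight_eq:
  assumes pco: "partial_circ_ordering X D" and b: "b \<in> set D" and i: "i \<in> set b"
  shows "tsp_weight D i = wt b i"
proof (cases "length b = 1")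
  case True
  then obtain z where "b = [z]" by (cases b) (auto simp: length_Suc_conv)
  then have "b = [i]" using i by simp
  then show ?thesis unfolding tsp_weight_def wt_def using b by auto
next
  case False
  have bne: "b \<noteq> []" using i by auto
  have "length b \<noteq> 0" using bne by simp
  then have l2: "2 \<le> length b" using False by linarith
  have n1: "\<not> (\<exists>b'\<in>set D. b' = [i])"
  proof
    assume "\<exists>b'\<in>set D. b' = [i]"
    then obtain b' where "b' \<in> set D" "b' = [i]" by blast
    then have "b' = b" using same_block[OF pco _ b _ i] by simp
    then have "b = [i]" using \<open>b' = [i]\<close> by simp
    then show False using False by simp
  qed
  have ce: "card (endpoints b) = 2" using endpoints_card[OF bne pco_props(4)[OF pco b]] l2 unfolding ind_def by simp
  have "(\<exists>b'\<in>set D. i \<in> endpoints b' \<and> card (endpoints b') = 2) \<longleftrightarrow> i = hd b \<or> i = last b"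
  proof
    assume "\<exists>b'\<in>set D. i \<in> endpoints b' \<and> card (endpoints b') = 2"
    then obtain b' where b': "b' \<in> set D" "i \<in> endpoints b'" by blast
    then have "i \<in> set b'" using endpoints_sub[of b'] by blast
    then have "b' = b" using same_block[OF pco b'(1) b _ i] by simp
    then show "i = hd b \<or> i = last b" using b'(2) bne unfolding endpoints_def by simp
  next
    assume "i = hd b \<or> i = last b"
    then have "i \<in> endpoints b" using bne unfolding endpoints_def by auto
    then show "\<exists>b'\<in>set D. i \<in> endpoints b' \<and> card (endpoints b') = 2" using b ce by blast
  qed
  then show ?thesis unfolding tsp_weight_def wt_def using n1 False by simp
qed

lemma wt_endpoint: "b \<noteq> [] \<Longrightarrow> i \<in> endpoints b \<Longrightarrow> wt b i = 1 / 2 ^ ind b"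
proof -
  assume b: "b \<noteq> []" "i \<in> endpoints b"
  then have i: "i = hd b \<or> i = last b" unfolding endpoints_def by auto
  show ?thesis
  proof (cases "length b = 1")
    case True then show ?thesis unfolding wt_def ind_def by simp
  next
    case False
    have "length b \<noteq> 0" using b by simp
    then have "2 \<le> length b" using False by linarith
    then show ?thesis unfolding wt_def ind_def using False i by simp
  qed
qed

lemma wt_interior: "i \<in> set b \<Longrightarrow> i \<notin> endpoints b \<Longrightarrow> wt b i = 0"
proof -
  assume i: "i \<in> set b" "i \<notin> endpoints b"
  have bne: "b \<noteq> []" using i by auto
  then have i2: "i \<noteq> hd b" "i \<noteq> last b" using i unfolding endpoints_def by auto
  have "length b \<noteq> 1"
  proof
    assume "length b = 1"
    then obtain z where "b = [z]" by (cases b) (auto simp: length_Suc_conv)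
    then show False using i i2 by simp
  qed
  then show ?thesis unfolding wt_def using i2 by simp
qed

lemma G_idx:
  assumes pco: "partial_circ_ordering X D" and n3: "card X \<ge> 3" and D2: "2 \<le> length D"
    and kl: "k < length D" "l < length D" "k \<noteq> l" and i: "i \<in> set (D!k)" and j: "j \<in> set (D!l)"
  shows "real (card {c \<in> consistent_orderings X D. adjacent_circ c i j}) * (real (length D) - 1)
         = 2 * real (card (consistent_orderings X D)) * wt (D!k) i * wt (D!l) j"
proof -
  have bk: "D!k \<in> set D" "D!l \<in> set D" using kl by auto
  have bne: "D!k \<noteq> D!l" using nth_block_neq[OF pco kl] .
  show ?thesis
  proof (cases "i \<in> endpoints (D!k) \<and> j \<in> endpoints (D!l)")
    case False
    have "{c \<in> consistent_orderings X D. adjacent_circ c i j} = {}"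
      using Adj[OF pco n3 D2 _ bk i j] bne False by blast
    moreover have "wt (D!k) i * wt (D!l) j = 0"
    proof (cases "i \<in> endpoints (D!k)")
      case True
      then have "j \<notin> endpoints (D!l)" using False by blast
      then show ?thesis using wt_interior[OF j] by simp
    next
      case False
      then show ?thesis using wt_interior[OF i] by simp
    qed
    ultimately show ?thesis by (simp only: card.empty of_nat_0 mult_zero_left mult_zero_right mult.assoc)
  next
    case True
    have kne: "D!k \<noteq> []" "D!l \<noteq> []" using pco_props(1)[OF pco] bk by auto
    define x where "x = (if last (D!k) = i then D!k else rev (D!k))"
    define y where "y = (if hd (D!l) = j then D!l else rev (D!l))"
    have xo: "x \<in> {D!k, rev (D!k)}" "y \<in> {D!l, rev (D!l)}" unfolding x_def y_def by auto
    have lx: "last x = i" using True kne unfolding x_def endpoints_def by (auto simp: last_rev)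
    have hy: "hd y = j" using True kne unfolding y_def endpoints_def by (auto simp: hd_rev)
    define J where "J = joinD D k l x y"
    have oJ: "consistent_orderings X J = {c \<in> consistent_orderings X D. adjacent_circ c i j}"
      unfolding J_def using join_o[OF pco kl xo] lx hy by simp
    have pJ: "partial_circ_ordering X J" unfolding J_def using join_pco[OF pco kl xo] .
    have lJ: "length J = length D - 1" unfolding J_def using join_length[OF pco kl xo] .
    have nJ: "nb J + ind (D!k) + ind (D!l) = nb D + 1" unfolding J_def using join_nb[OF pco kl xo] .
    obtain p where p: "length D = Suc (Suc p)" using D2 by (metis add_2_eq_Suc le_Suc_ex)
    have FJ: "2 * card (consistent_orderings X J) = fact p * 2 ^ nb J"
      using count_F[OF pJ n3] lJ p by simp
    have FD: "2 * card (consistent_orderings X D) = fact (Suc p) * 2 ^ nb D"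
      using count_F[OF pco n3] p by simp
    have "2 * card (consistent_orderings X J) * Suc p * 2 ^ ind (D!k) * 2 ^ ind (D!l)
        = fact (Suc p) * 2 ^ (nb J + ind (D!k) + ind (D!l))"
      unfolding FJ by (simp add: power_add algebra_simps)
    also have "... = 2 * (2 * card (consistent_orderings X D))" unfolding nJ FD by simp
    finally have "2 * (card (consistent_orderings X J) * Suc p * 2 ^ ind (D!k) * 2 ^ ind (D!l))
        = 2 * (2 * card (consistent_orderings X D))" by (simp only: mult.assoc)
    then have nat_eq: "card (consistent_orderings X J) * Suc p * 2 ^ ind (D!k) * 2 ^ ind (D!l)
        = 2 * card (consistent_orderings X D)" by (simp only: mult_cancel_left) simp
    then have "real (card (consistent_orderings X J) * Suc p * 2 ^ ind (D!k) * 2 ^ ind (D!l))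
        = real (2 * card (consistent_orderings X D))" by (rule arg_cong)
    then have real_eq: "real (card (consistent_orderings X J)) * real (Suc p) * 2 ^ ind (D!k) * 2 ^ ind (D!l)
        = 2 * real (card (consistent_orderings X D))"
      by (simp only: of_nat_mult of_nat_power of_nat_numeral)
    have w: "wt (D!k) i = 1 / 2 ^ ind (D!k)" "wt (D!l) j = 1 / 2 ^ ind (D!l)"
      using wt_endpoint[OF kne(1)] wt_endpoint[OF kne(2)] True by auto
    have "real (length D) - 1 = real (Suc p)" using p by simp
    then show ?thesis unfolding oJ[symmetric] w using real_eq by (simp add: field_simps)
  qed
qed

lemma G_set:
  assumes pco: "partial_circ_ordering X D" and n3: "card X \<ge> 3" and D2: "2 \<le> length D"
    and b: "b1 \<in> set D" "b2 \<in> set D" "b1 \<noteq> b2" and i: "i \<in> set b1" and j: "j \<in> set b2"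
  shows "real (card {c \<in> consistent_orderings X D. adjacent_circ c i j}) * (real (length D) - 1)
         = 2 * real (card (consistent_orderings X D)) * tsp_weight D i * tsp_weight D j"
proof -
  obtain k where k: "k < length D" "D!k = b1" using b(1) by (metis in_set_conv_nth)
  obtain l where l: "l < length D" "D!l = b2" using b(2) by (metis in_set_conv_nth)
  have "k \<noteq> l" using k l b(3) by auto
  then show ?thesis using G_idx[OF pco n3 D2 k(1) l(1) _ , of i j] k l i j
      tsp_weight_eq[OF pco b(1) i] tsp_weight_eq[OF pco b(2) j] by simp
qed



lemma join_blocks_image:
  "join_blocks Cs r s = (\<lambda>(x, y). joinD Cs r s x y) ` ({Cs!r, rev (Cs!r)} \<times> {Cs!s, rev (Cs!s)})"
  unfolding join_blocks_def joinD_def rest_def by auto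

lemma oj_union:
  "consistent_orderings_join X Cs r s =
     (\<Union>(x, y)\<in>{Cs!r, rev (Cs!r)} \<times> {Cs!s, rev (Cs!s)}. consistent_orderings X (joinD Cs r s x y))"
  unfolding consistent_orderings_join_def join_blocks_image by auto

lemma orient_card:
  assumes "b \<noteq> []" "distinct b"
  shows "card {b, rev b} = 2 ^ ind b"
proof (cases "length b = 1")
  case True
  then obtain z where "b = [z]" by (cases b) (auto simp: length_Suc_conv)
  then show ?thesis unfolding ind_def by simp
next
  case False
  have "length b \<noteq> 0" using assms by simp
  then have l2: "2 \<le> length b" using False by linarith
  have "hd b \<noteq> last b" using endpoints_card[OF assms] l2 unfolding endpoints_def ind_def using assms
    by (auto split: if_splits)
  then have "b \<noteq> rev b" using assms by (metis hd_rev)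
  then show ?thesis using l2 unfolding ind_def by simp
qed

lemma last_orient_end: "b \<noteq> [] \<Longrightarrow> x \<in> {b, rev b} \<Longrightarrow> last x \<in> endpoints b"
  unfolding endpoints_def by (auto simp: last_rev)

lemma hd_orient_end: "b \<noteq> [] \<Longrightarrow> x \<in> {b, rev b} \<Longrightarrow> hd x \<in> endpoints b"
  unfolding endpoints_def by (auto simp: hd_rev)

lemma orient_sum_last:
  assumes "b \<noteq> []" "distinct b"
  shows "(\<Sum>x\<in>{b, rev b}. wt b (last x)) = 1"
proof -
  have "(\<Sum>x\<in>{b, rev b}. wt b (last x)) = (\<Sum>x\<in>{b, rev b}. 1 / 2 ^ ind b)"
    using wt_endpoint[OF assms(1)] last_orient_end[OF assms(1)] by (intro sum.cong) auto
  also have "... = 1" using orient_card[OF assms] by simp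
  finally show ?thesis .
qed

lemma orient_sum_hd:
  assumes "b \<noteq> []" "distinct b"
  shows "(\<Sum>x\<in>{b, rev b}. wt b (hd x)) = 1"
proof -
  have "(\<Sum>x\<in>{b, rev b}. wt b (hd x)) = (\<Sum>x\<in>{b, rev b}. 1 / 2 ^ ind b)"
    using wt_endpoint[OF assms(1)] hd_orient_end[OF assms(1)] by (intro sum.cong) auto
  also have "... = 1" using orient_card[OF assms] by simp
  finally show ?thesis .
qed

lemma orient_sum_last_ind:
  assumes "b \<noteq> []" "distinct b" "i \<in> set b"
  shows "(\<Sum>x\<in>{b, rev b}. wt b (last x) * (if i = hd x then 1 else 0)) = wt b i"
proof (cases "length b = 1")
  case True
  then obtain z where "b = [z]" by (cases b) (auto simp: length_Suc_conv)
  then show ?thesis using assms unfolding wt_def by simp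
next
  case False
  have "length b \<noteq> 0" using assms by simp
  then have l2: "2 \<le> length b" using False by linarith
  have hl: "hd b \<noteq> last b" using endpoints_card[OF assms(1,2)] l2 unfolding endpoints_def ind_def using assms
    by (auto split: if_splits)
  then have ne: "b \<noteq> rev b" using assms by (metis hd_rev)
  have w1: "wt b (last b) = 1/2" "wt b (hd b) = 1/2" using False unfolding wt_def by auto
  have "(\<Sum>x\<in>{b, rev b}. wt b (last x) * (if i = hd x then 1 else 0))
      = wt b (last b) * (if i = hd b then 1 else 0) + wt b (hd b) * (if i = last b then 1 else 0)"
    using ne assms(1) by (simp add: last_rev hd_rev)
  also have "... = wt b i" using w1 hl False unfolding wt_def by auto
  finally show ?thesis .
qed

lemma orient_sum_hd_ind:
  assumes "b \<noteq> []" "distinct b" "i \<in> set b"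
  shows "(\<Sum>x\<in>{b, rev b}. wt b (hd x) * (if i = last x then 1 else 0)) = wt b i"
proof (cases "length b = 1")
  case True
  then obtain z where "b = [z]" by (cases b) (auto simp: length_Suc_conv)
  then show ?thesis using assms unfolding wt_def by simp
next
  case False
  have "length b \<noteq> 0" using assms by simp
  then have l2: "2 \<le> length b" using False by linarith
  have hl: "hd b \<noteq> last b" using endpoints_card[OF assms(1,2)] l2 unfolding endpoints_def ind_def using assms
    by (auto split: if_splits)
  then have ne: "b \<noteq> rev b" using assms by (metis hd_rev)
  have w1: "wt b (last b) = 1/2" "wt b (hd b) = 1/2" using False unfolding wt_def by auto
  have "(\<Sum>x\<in>{b, rev b}. wt b (hd x) * (if i = last x then 1 else 0))
      = wt b (hd b) * (if i = last b then 1 else 0) + wt b (last b) * (if i = hd b then 1 else 0)"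
    using ne assms(1) by (simp add: last_rev hd_rev)
  also have "... = wt b i" using w1 hl False unfolding wt_def by auto
  finally show ?thesis .
qed

lemma wt_app_left:
  assumes "x \<noteq> []" "y \<noteq> []" "distinct (x @ y)" "i \<in> set x"
  shows "wt (x @ y) i = (if i = hd x then 1/2 else 0)"
proof -
  have "length (x @ y) \<noteq> 1" using assms(1,2) by (cases x; cases y) auto
  moreover have "hd (x @ y) = hd x" using assms(1) by simp
  moreover have "i \<noteq> last (x @ y)" using assms by auto
  ultimately show ?thesis unfolding wt_def by auto
qed

lemma wt_app_right:
  assumes "x \<noteq> []" "y \<noteq> []" "distinct (x @ y)" "i \<in> set y"
  shows "wt (x @ y) i = (if i = last y then 1/2 else 0)"
proof -
  have "length (x @ y) \<noteq> 1" using assms(1,2) by (cases x; cases y) auto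
  moreover have "last (x @ y) = last y" using assms(2) by simp
  moreover have "i \<noteq> hd (x @ y)" using assms by (cases x) auto
  ultimately show ?thesis unfolding wt_def by auto
qed



lemma orient_inj_last:
  assumes "b \<noteq> []" "distinct b" "x \<in> {b, rev b}" "x' \<in> {b, rev b}" "last x = last x'"
  shows "x = x'"
proof (rule ccontr)
  assume ne: "x \<noteq> x'"
  then have "last b = last (rev b)" using assms(3-5) by auto
  then have "last b = hd b" using assms(1) by (simp add: last_rev)
  then have "card (endpoints b) = 1" using assms(1) unfolding endpoints_def by simp
  then have "ind b = 0" using endpoints_card[OF assms(1,2)] by (simp add: ind_def split: if_splits)
  then have "length b \<le> 1" unfolding ind_def by (simp split: if_splits)
  then have "rev b = b" by (cases b) auto
  then show False using ne assms(3,4) by auto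
qed

lemma orient_inj_hd:
  assumes "b \<noteq> []" "distinct b" "x \<in> {b, rev b}" "x' \<in> {b, rev b}" "hd x = hd x'"
  shows "x = x'"
proof (rule ccontr)
  assume ne: "x \<noteq> x'"
  then have "hd b = hd (rev b)" using assms(3-5) by auto
  then have "last b = hd b" using assms(1) by (simp add: hd_rev)
  then have "card (endpoints b) = 1" using assms(1) unfolding endpoints_def by simp
  then have "ind b = 0" using endpoints_card[OF assms(1,2)] by (simp add: ind_def split: if_splits)
  then have "length b \<le> 1" unfolding ind_def by (simp split: if_splits)
  then have "rev b = b" by (cases b) auto
  then show False using ne assms(3,4) by auto
qed

context
  fixes X :: "'a set" and Cs :: "'a list list" and r s m :: nat
  assumes pco: "partial_circ_ordering X Cs" and n3: "card X \<ge> 3" and len: "length Cs = m"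
    and m3: "m \<ge> 3" and rs: "r < m" "s < m" "r \<noteq> s"
begin

abbreviation "OC \<equiv> consistent_orderings X Cs"
abbreviation "Ox \<equiv> {Cs!r, rev (Cs!r)}"
abbreviation "Oy \<equiv> {Cs!s, rev (Cs!s)}"
abbreviation "AA x y \<equiv> {c \<in> OC. adjacent_circ c (last x) (hd y)}"
abbreviation "JJ x y \<equiv> joinD Cs r s x y"

lemma basics: "Cs!r \<in> set Cs" "Cs!s \<in> set Cs" "Cs!r \<noteq> Cs!s" "Cs!r \<noteq> []" "Cs!s \<noteq> []"
  "distinct (Cs!r)" "distinct (Cs!s)" "set (Cs!r) \<inter> set (Cs!s) = {}"
proof -
  show 1: "Cs!r \<in> set Cs" "Cs!s \<in> set Cs" using rs len by auto
  show 2: "Cs!r \<noteq> Cs!s" using nth_block_neq[OF pco] rs len by auto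
  show "Cs!r \<noteq> []" "Cs!s \<noteq> []" using pco_props(1)[OF pco] 1 by auto
  show "distinct (Cs!r)" "distinct (Cs!s)" using pco_props(4)[OF pco] 1 by auto
  show "set (Cs!r) \<inter> set (Cs!s) = {}" using pco_props(5)[OF pco 1 2] .
qed

lemma kl: "r < length Cs" "s < length Cs" "r \<noteq> s" using rs len by auto

lemma JJ_props:
  assumes "x \<in> Ox" "y \<in> Oy"
  shows "consistent_orderings X (JJ x y) = AA x y" "partial_circ_ordering X (JJ x y)"
    "length (JJ x y) = m - 1"
  using join_o[OF pco kl assms] join_pco[OF pco kl assms] join_length[OF pco kl assms] len by auto

lemma OJ_union: "consistent_orderings_join X Cs r s = (\<Union>(x, y)\<in>Ox \<times> Oy. AA x y)"
  unfolding oj_union using JJ_props(1) by auto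

lemma AA_disj:
  assumes p: "(x, y) \<in> Ox \<times> Oy" "(x', y') \<in> Ox \<times> Oy" "(x, y) \<noteq> (x', y')"
  shows "AA x y \<inter> AA x' y' = {}"
proof (rule ccontr)
  assume "AA x y \<inter> AA x' y' \<noteq> {}"
  then obtain c where c: "c \<in> AA x y" "c \<in> AA x' y'" by blast
  have xo: "x \<in> Ox" "y \<in> Oy" "x' \<in> Ox" "y' \<in> Oy" using p by auto
  have cJ: "c \<in> consistent_orderings X (JJ x y)" using c(1) JJ_props(1)[OF xo(1,2)] by simp
  have pJ: "partial_circ_ordering X (JJ x y)" using JJ_props(2)[OF xo(1,2)] .
  have lJ: "2 \<le> length (JJ x y)" using JJ_props(3)[OF xo(1,2)] m3 by simp
  have L: "x @ y \<in> set (JJ x y)" unfolding joinD_def by simp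
  have sx: "set x = set (Cs!r)" "set y = set (Cs!s)" "set x' = set (Cs!r)" "set y' = set (Cs!s)"
    using xo by auto
  have ne: "x \<noteq> []" "y \<noteq> []" "x' \<noteq> []" "y' \<noteq> []" using xo basics(4,5) by auto
  have m1: "last x' \<in> set (Cs!r)" "hd y' \<in> set (Cs!s)" "last x \<in> set (Cs!r)" "hd y \<in> set (Cs!s)"
    using ne sx by (metis last_in_set hd_in_set)+
  have adj: "adjacent_circ c (last x') (hd y')" using c(2) by simp
  have inL: "last x' \<in> set (x @ y)" "hd y' \<in> set (x @ y)" using m1 sx by auto
  have "consec_in_block (x @ y) (last x') (hd y')"
    using Adj[OF pJ n3 lJ cJ L L inL adj] by blast
  then have d: "consec_in_block x (last x') (hd y') \<or> consec_in_block y (last x') (hd y') \<or>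
      {last x', hd y'} = {last x, hd y}" using consec_append[OF ne(1,2)] by simp
  have nx: "\<not> consec_in_block x (last x') (hd y')"
  proof
    assume cx: "consec_in_block x (last x') (hd y')"
    have "hd y' \<in> set x" using consec_mem[OF cx] by blast
    then have "hd y' \<in> set (Cs!r) \<inter> set (Cs!s)" using m1(2) sx(1) by simp
    then show False using basics(8) by simp
  qed
  have ny: "\<not> consec_in_block y (last x') (hd y')"
  proof
    assume cy: "consec_in_block y (last x') (hd y')"
    have "last x' \<in> set y" using consec_mem[OF cy] by blast
    then have "last x' \<in> set (Cs!r) \<inter> set (Cs!s)" using m1(1) sx(2) by simp
    then show False using basics(8) by simp
  qed
  have e: "{last x', hd y'} = {last x, hd y}"
    using d
  proof (elim disjE)
    assume "consec_in_block x (last x') (hd y')" then show ?thesis using nx by contradiction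
  next
    assume "consec_in_block y (last x') (hd y')" then show ?thesis using ny by contradiction
  qed
  have "last x' \<noteq> hd y"
  proof
    assume "last x' = hd y"
    then have "last x' \<in> set (Cs!r) \<inter> set (Cs!s)" using m1(1,4) by simp
    then show False using basics(8) by simp
  qed
  then have "last x' = last x \<and> hd y' = hd y" using e by (simp add: doubleton_eq_iff)
  then have "x' = x" "y' = y"
    using orient_inj_last[OF basics(4,6) xo(3,1)] orient_inj_hd[OF basics(5,7) xo(4,2)] by simp_all
  then show False using p(3) by simp
qed

lemma fin_OC: "finite OC" using finite_o pco_props(7)[OF pco] by blast

lemma card_filter_OJ:
  "real (card {c \<in> consistent_orderings_join X Cs r s. Q c}) = (\<Sum>(x, y)\<in>Ox \<times> Oy. real (card {c \<in> AA x y. Q c}))"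
proof -
  have "{c \<in> consistent_orderings_join X Cs r s. Q c} = (\<Union>(x, y)\<in>Ox \<times> Oy. {c \<in> AA x y. Q c})"
    unfolding OJ_union by auto
  moreover have "card (\<Union>(x, y)\<in>Ox \<times> Oy. {c \<in> AA x y. Q c}) = (\<Sum>(x, y)\<in>Ox \<times> Oy. card {c \<in> AA x y. Q c})"
  proof -
    have "card (\<Union>p\<in>Ox \<times> Oy. {c \<in> AA (fst p) (snd p). Q c}) = (\<Sum>p\<in>Ox \<times> Oy. card {c \<in> AA (fst p) (snd p). Q c})"
    proof (rule card_UN_disjoint)
      show "finite (Ox \<times> Oy)" by simp
      show "\<forall>p\<in>Ox \<times> Oy. finite {c \<in> AA (fst p) (snd p). Q c}" using fin_OC by simp
      show "\<forall>p\<in>Ox \<times> Oy. \<forall>p'\<in>Ox \<times> Oy. p \<noteq> p' \<longrightarrow>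
          {c \<in> AA (fst p) (snd p). Q c} \<inter> {c \<in> AA (fst p') (snd p'). Q c} = {}"
      proof (intro ballI impI)
        fix p p' assume "p \<in> Ox \<times> Oy" "p' \<in> Ox \<times> Oy" "p \<noteq> p'"
        then have "AA (fst p) (snd p) \<inter> AA (fst p') (snd p') = {}"
          using AA_disj[of "fst p" "snd p" "fst p'" "snd p'"] by auto
        then show "{c \<in> AA (fst p) (snd p). Q c} \<inter> {c \<in> AA (fst p') (snd p'). Q c} = {}" by blast
      qed
    qed
    then show ?thesis by (simp add: case_prod_beta)
  qed
  ultimately show ?thesis by (simp add: case_prod_beta)
qed

lemma wt_eq: "i \<in> set (Cs!r) \<Longrightarrow> tsp_weight Cs i = wt (Cs!r) i" "j \<in> set (Cs!s) \<Longrightarrow> tsp_weight Cs j = wt (Cs!s) j"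
  using tsp_weight_eq[OF pco basics(1)] tsp_weight_eq[OF pco basics(2)] by auto

lemma AA_count:
  assumes "x \<in> Ox" "y \<in> Oy"
  shows "real (card (AA x y)) * (real m - 1) = 2 * real (card OC) * wt (Cs!r) (last x) * wt (Cs!s) (hd y)"
proof -
  have ne: "x \<noteq> []" "y \<noteq> []" using assms basics(4,5) by auto
  have "last x \<in> set (Cs!r)" using last_orient_end[OF basics(4) assms(1)] endpoints_sub[of "Cs!r"] by blast
  moreover have "hd y \<in> set (Cs!s)" using hd_orient_end[OF basics(5) assms(2)] endpoints_sub[of "Cs!s"] by blast
  ultimately show ?thesis using G_set[OF pco n3 _ basics(1,2,3), of "last x" "hd y"] len m3 wt_eq by simp
qed

lemma sum_prod_sep: "(\<Sum>(x, y)\<in>A \<times> B. f x * g y) = (\<Sum>x\<in>A. f x) * (\<Sum>y\<in>B. (g y :: real))"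
  by (simp add: sum.cartesian_product[symmetric] sum_product)

lemma OJ_count: "real (card (consistent_orderings_join X Cs r s)) * (real m - 1) = 2 * real (card OC)"
proof -
  have "real (card (consistent_orderings_join X Cs r s)) = (\<Sum>(x, y)\<in>Ox \<times> Oy. real (card (AA x y)))"
    using card_filter_OJ[of "\<lambda>_. True"] by simp
  then have "real (card (consistent_orderings_join X Cs r s)) * (real m - 1)
      = (\<Sum>(x, y)\<in>Ox \<times> Oy. real (card (AA x y)) * (real m - 1))"
    by (simp add: sum_distrib_right case_prod_beta)
  also have "... = (\<Sum>(x, y)\<in>Ox \<times> Oy. (2 * real (card OC)) * (wt (Cs!r) (last x) * wt (Cs!s) (hd y)))"
    using AA_count by (intro sum.cong) auto
  also have "... = 2 * real (card OC) * ((\<Sum>x\<in>Ox. wt (Cs!r) (last x)) * (\<Sum>y\<in>Oy. wt (Cs!s) (hd y)))"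
    by (simp add: sum_distrib_left[symmetric] case_prod_beta sum_prod_sep[symmetric] mult.assoc)
  also have "... = 2 * real (card OC)" using orient_sum_last[OF basics(4,6)] orient_sum_hd[OF basics(5,7)] by simp
  finally show ?thesis .
qed


lemma OJ_sub: "consistent_orderings_join X Cs r s \<subseteq> OC"
proof
  fix c assume "c \<in> consistent_orderings_join X Cs r s"
  then obtain p where p: "p \<in> Ox \<times> Oy" "c \<in> (case p of (x, y) \<Rightarrow> AA x y)" unfolding OJ_union by blast
  then show "c \<in> OC" by (cases p) simp
qed

lemma lenm: "2 \<le> length Cs" using len m3 by simp

lemma E1: "consec_in_some_block Cs i j \<Longrightarrow>
  {c \<in> consistent_orderings_join X Cs r s. adjacent_circ c i j} = consistent_orderings_join X Cs r s"
proof -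
  assume a: "consec_in_some_block Cs i j"
  have "adjacent_circ c i j" if "c \<in> consistent_orderings_join X Cs r s" for c
    using o_consec[OF _ a] OJ_sub that by blast
  then show ?thesis by blast
qed

lemma E2:
  assumes i: "i \<in> set (Cs!r)" and j: "j \<in> set (Cs!s)"
  shows "real (card {c \<in> consistent_orderings_join X Cs r s. adjacent_circ c i j}) * (real m - 1)
     = 2 * real (card OC) * tsp_weight Cs i * tsp_weight Cs j"
proof -
  have "{c \<in> consistent_orderings_join X Cs r s. adjacent_circ c i j} = {c \<in> OC. adjacent_circ c i j}"
  proof (intro equalityI subsetI)
    fix c assume "c \<in> {c \<in> consistent_orderings_join X Cs r s. adjacent_circ c i j}"
    then show "c \<in> {c \<in> OC. adjacent_circ c i j}" using OJ_sub by blast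
  next
    fix c assume c: "c \<in> {c \<in> OC. adjacent_circ c i j}"
    then have cO: "c \<in> OC" and adj: "adjacent_circ c i j" by auto
    have "i \<in> endpoints (Cs!r) \<and> j \<in> endpoints (Cs!s)"
      using Adj[OF pco n3 lenm cO basics(1,2) i j adj] basics(3) by blast
    then have ij: "i = hd (Cs!r) \<or> i = last (Cs!r)" "j = hd (Cs!s) \<or> j = last (Cs!s)"
      using basics(4,5) unfolding endpoints_def by auto
    define x where "x = (if last (Cs!r) = i then Cs!r else rev (Cs!r))"
    define y where "y = (if hd (Cs!s) = j then Cs!s else rev (Cs!s))"
    have xo: "x \<in> Ox" "y \<in> Oy" unfolding x_def y_def by auto
    have "last x = i" using ij(1) basics(4) unfolding x_def by (auto simp: last_rev)
    moreover have "hd y = j" using ij(2) basics(5) unfolding y_def by (auto simp: hd_rev)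
    ultimately have "c \<in> AA x y" using cO adj by simp
    then show "c \<in> {c \<in> consistent_orderings_join X Cs r s. adjacent_circ c i j}"
      unfolding OJ_union using xo adj by blast
  qed
  then show ?thesis using G_set[OF pco n3 lenm basics(1,2,3) i j] len by simp
qed

lemma E5:
  assumes t: "t < m" and i: "i \<in> set (Cs!t)" and j: "j \<in> set (Cs!t)" and nc: "\<not> consec_in_some_block Cs i j"
  shows "{c \<in> consistent_orderings_join X Cs r s. adjacent_circ c i j} = {}"
proof -
  have b: "Cs!t \<in> set Cs" using t len by simp
  have "\<not> consec_in_block (Cs!t) i j" using nc b unfolding consec_in_some_block_def by blast
  then show ?thesis using OJ_sub Adj[OF pco n3 lenm _ b b i j] by blast
qed

lemma J_facts:
  assumes "x \<in> Ox" "y \<in> Oy"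
  shows "2 \<le> length (JJ x y)" "real (length (JJ x y)) - 1 = real m - 2"
    "\<And>t. t < m \<Longrightarrow> t \<noteq> r \<Longrightarrow> t \<noteq> s \<Longrightarrow> Cs!t \<in> set (JJ x y)"
    "x @ y \<in> set (JJ x y)"
proof -
  show "2 \<le> length (JJ x y)" using JJ_props(3)[OF assms] m3 by simp
  have "length (JJ x y) = m - 1" using JJ_props(3)[OF assms] .
  then show "real (length (JJ x y)) - 1 = real m - 2" using m3 by (simp add: of_nat_diff)
  show "\<And>t. t < m \<Longrightarrow> t \<noteq> r \<Longrightarrow> t \<noteq> s \<Longrightarrow> Cs!t \<in> set (JJ x y)"
    unfolding join_set[OF pco kl assms] using len by auto
  show "x @ y \<in> set (JJ x y)" unfolding joinD_def by simp
qed

lemma E3: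
  assumes t: "t < m" "t \<noteq> r" "t \<noteq> s" and u: "u < m" "u \<noteq> r" "u \<noteq> s" and tu: "t \<noteq> u"
    and i: "i \<in> set (Cs!t)" and j: "j \<in> set (Cs!u)"
  shows "real (card {c \<in> consistent_orderings_join X Cs r s. adjacent_circ c i j}) * ((real m - 1) * (real m - 2))
     = 4 * real (card OC) * tsp_weight Cs i * tsp_weight Cs j"
proof -
  have bt: "Cs!t \<in> set Cs" "Cs!u \<in> set Cs" using t u len by auto
  have tne: "Cs!t \<noteq> Cs!u" using nth_block_neq[OF pco] t u tu len by auto
  have trm: "real (card {c \<in> AA x y. adjacent_circ c i j}) * ((real m - 1) * (real m - 2))
      = (4 * real (card OC) * tsp_weight Cs i * tsp_weight Cs j) * (wt (Cs!r) (last x) * wt (Cs!s) (hd y))"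
    if xo: "x \<in> Ox" "y \<in> Oy" for x y
  proof -
    have pJ: "partial_circ_ordering X (JJ x y)" using JJ_props(2)[OF xo] .
    have oJ: "consistent_orderings X (JJ x y) = AA x y" using JJ_props(1)[OF xo] .
    have tJ: "Cs!t \<in> set (JJ x y)" "Cs!u \<in> set (JJ x y)" using J_facts(3)[OF xo] t u by auto
    have G: "real (card {c \<in> AA x y. adjacent_circ c i j}) * (real m - 2)
        = 2 * real (card (AA x y)) * tsp_weight (JJ x y) i * tsp_weight (JJ x y) j"
      using G_set[OF pJ n3 J_facts(1)[OF xo] tJ tne i j] oJ J_facts(2)[OF xo] by simp
    have w: "tsp_weight (JJ x y) i = tsp_weight Cs i" "tsp_weight (JJ x y) j = tsp_weight Cs j"
      using tsp_weight_eq[OF pJ tJ(1) i] tsp_weight_eq[OF pco bt(1) i]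
        tsp_weight_eq[OF pJ tJ(2) j] tsp_weight_eq[OF pco bt(2) j] by simp_all
    have "real (card {c \<in> AA x y. adjacent_circ c i j}) * ((real m - 1) * (real m - 2))
        = (real (card {c \<in> AA x y. adjacent_circ c i j}) * (real m - 2)) * (real m - 1)" by simp
    also have "... = 2 * tsp_weight Cs i * tsp_weight Cs j * (real (card (AA x y)) * (real m - 1))"
      unfolding G w by simp
    also have "... = (4 * real (card OC) * tsp_weight Cs i * tsp_weight Cs j) * (wt (Cs!r) (last x) * wt (Cs!s) (hd y))"
      unfolding AA_count[OF xo] by simp
    finally show ?thesis .
  qed
  have "real (card {c \<in> consistent_orderings_join X Cs r s. adjacent_circ c i j}) * ((real m - 1) * (real m - 2))
      = (\<Sum>(x, y)\<in>Ox \<times> Oy. real (card {c \<in> AA x y. adjacent_circ c i j}) * ((real m - 1) * (real m - 2)))"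
    unfolding card_filter_OJ by (simp add: sum_distrib_right case_prod_beta)
  also have "... = (\<Sum>(x, y)\<in>Ox \<times> Oy. (4 * real (card OC) * tsp_weight Cs i * tsp_weight Cs j) * (wt (Cs!r) (last x) * wt (Cs!s) (hd y)))"
    using trm by (intro sum.cong) auto
  also have "... = (4 * real (card OC) * tsp_weight Cs i * tsp_weight Cs j) * ((\<Sum>x\<in>Ox. wt (Cs!r) (last x)) * (\<Sum>y\<in>Oy. wt (Cs!s) (hd y)))"
    by (simp add: sum_distrib_left[symmetric] case_prod_beta sum_prod_sep[symmetric])
  also have "... = 4 * real (card OC) * tsp_weight Cs i * tsp_weight Cs j"
    using orient_sum_last[OF basics(4,6)] orient_sum_hd[OF basics(5,7)] by simp
  finally show ?thesis .
qed


lemma E4_common: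
  assumes t: "t < m" "t \<noteq> r" "t \<noteq> s" and i: "i \<in> set (Cs!r) \<union> set (Cs!s)" and j: "j \<in> set (Cs!t)"
    and xo: "x \<in> Ox" "y \<in> Oy"
  shows "real (card {c \<in> AA x y. adjacent_circ c i j}) * ((real m - 1) * (real m - 2))
      = 4 * real (card OC) * wt (Cs!r) (last x) * wt (Cs!s) (hd y) * wt (x @ y) i * tsp_weight Cs j"
proof -
  have bt: "Cs!t \<in> set Cs" using t len by auto
  have pJ: "partial_circ_ordering X (JJ x y)" using JJ_props(2)[OF xo] .
  have oJ: "consistent_orderings X (JJ x y) = AA x y" using JJ_props(1)[OF xo] .
  have tJ: "Cs!t \<in> set (JJ x y)" using J_facts(3)[OF xo] t by auto
  have LJ: "x @ y \<in> set (JJ x y)" using J_facts(4)[OF xo] .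
  have iL: "i \<in> set (x @ y)" using i xo by auto
  have "Cs!t \<noteq> Cs!r" "Cs!t \<noteq> Cs!s" using nth_block_neq[OF pco] t rs len by auto
  then have "set (Cs!t) \<inter> set (Cs!r) = {}" "set (Cs!t) \<inter> set (Cs!s) = {}"
    using pco_props(5)[OF pco bt basics(1)] pco_props(5)[OF pco bt basics(2)] by auto
  then have "i \<notin> set (Cs!t)" using i by blast
  then have Lne: "x @ y \<noteq> Cs!t"
  proof -
    assume ni: "i \<notin> set (Cs!t)"
    show ?thesis
    proof
      assume "x @ y = Cs!t"
      then have "i \<in> set (Cs!t)" using iL by simp
      then show False using ni by blast
    qed
  qed
  have G: "real (card {c \<in> AA x y. adjacent_circ c i j}) * (real m - 2)
      = 2 * real (card (AA x y)) * tsp_weight (JJ x y) i * tsp_weight (JJ x y) j"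
    using G_set[OF pJ n3 J_facts(1)[OF xo] LJ tJ Lne iL j] oJ J_facts(2)[OF xo] by simp
  have w: "tsp_weight (JJ x y) i = wt (x @ y) i" "tsp_weight (JJ x y) j = tsp_weight Cs j"
    using tsp_weight_eq[OF pJ LJ iL] tsp_weight_eq[OF pJ tJ j] tsp_weight_eq[OF pco bt j] by simp_all
  have "real (card {c \<in> AA x y. adjacent_circ c i j}) * ((real m - 1) * (real m - 2))
      = (real (card {c \<in> AA x y. adjacent_circ c i j}) * (real m - 2)) * (real m - 1)" by simp
  also have "... = 2 * wt (x @ y) i * tsp_weight Cs j * (real (card (AA x y)) * (real m - 1))"
    unfolding G w by simp
  also have "... = 4 * real (card OC) * wt (Cs!r) (last x) * wt (Cs!s) (hd y) * wt (x @ y) i * tsp_weight Cs j"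
    unfolding AA_count[OF xo] by simp
  finally show ?thesis .
qed

lemma xy_facts:
  assumes xo: "x \<in> Ox" "y \<in> Oy"
  shows "x \<noteq> []" "y \<noteq> []" "distinct (x @ y)" "set x = set (Cs!r)" "set y = set (Cs!s)"
proof -
  show "x \<noteq> []" "y \<noteq> []" using xo basics(4,5) by auto
  show "distinct (x @ y)" using pco_props(4)[OF JJ_props(2)[OF xo] J_facts(4)[OF xo]] .
  show "set x = set (Cs!r)" "set y = set (Cs!s)" using xo by auto
qed

lemma E4R:
  assumes t: "t < m" "t \<noteq> r" "t \<noteq> s" and i: "i \<in> set (Cs!r)" and j: "j \<in> set (Cs!t)"
  shows "real (card {c \<in> consistent_orderings_join X Cs r s. adjacent_circ c i j}) * ((real m - 1) * (real m - 2))
     = 2 * real (card OC) * tsp_weight Cs i * tsp_weight Cs j"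
proof -
  have trm: "real (card {c \<in> AA x y. adjacent_circ c i j}) * ((real m - 1) * (real m - 2))
      = (2 * real (card OC) * tsp_weight Cs j) * ((wt (Cs!r) (last x) * (if i = hd x then 1 else 0)) * wt (Cs!s) (hd y))"
    if xo: "x \<in> Ox" "y \<in> Oy" for x y
  proof -
    have "wt (x @ y) i = (if i = hd x then 1/2 else 0)"
      using wt_app_left[OF xy_facts(1,2,3)[OF xo]] i xy_facts(4)[OF xo] by simp
    then show ?thesis using E4_common[OF t _ j xo, of i] i by simp
  qed
  have "real (card {c \<in> consistent_orderings_join X Cs r s. adjacent_circ c i j}) * ((real m - 1) * (real m - 2))
      = (\<Sum>(x, y)\<in>Ox \<times> Oy. real (card {c \<in> AA x y. adjacent_circ c i j}) * ((real m - 1) * (real m - 2)))"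
    unfolding card_filter_OJ by (simp add: sum_distrib_right case_prod_beta)
  also have "... = (\<Sum>(x, y)\<in>Ox \<times> Oy. (2 * real (card OC) * tsp_weight Cs j) * ((wt (Cs!r) (last x) * (if i = hd x then 1 else 0)) * wt (Cs!s) (hd y)))"
    using trm by (intro sum.cong) auto
  also have "... = (2 * real (card OC) * tsp_weight Cs j) * (\<Sum>(x, y)\<in>Ox \<times> Oy. (wt (Cs!r) (last x) * (if i = hd x then 1 else 0)) * wt (Cs!s) (hd y))"
    by (simp add: sum_distrib_left case_prod_beta)
  also have "... = (2 * real (card OC) * tsp_weight Cs j) * ((\<Sum>x\<in>Ox. wt (Cs!r) (last x) * (if i = hd x then 1 else 0)) * (\<Sum>y\<in>Oy. wt (Cs!s) (hd y)))"
    by (simp only: sum_prod_sep)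
  also have "... = 2 * real (card OC) * tsp_weight Cs i * tsp_weight Cs j"
    using orient_sum_last_ind[OF basics(4,6) i] orient_sum_hd[OF basics(5,7)] wt_eq(1)[OF i] by simp
  finally show ?thesis .
qed

lemma E4S:
  assumes t: "t < m" "t \<noteq> r" "t \<noteq> s" and i: "i \<in> set (Cs!s)" and j: "j \<in> set (Cs!t)"
  shows "real (card {c \<in> consistent_orderings_join X Cs r s. adjacent_circ c i j}) * ((real m - 1) * (real m - 2))
     = 2 * real (card OC) * tsp_weight Cs i * tsp_weight Cs j"
proof -
  have trm: "real (card {c \<in> AA x y. adjacent_circ c i j}) * ((real m - 1) * (real m - 2))
      = (2 * real (card OC) * tsp_weight Cs j) * (wt (Cs!r) (last x) * (wt (Cs!s) (hd y) * (if i = last y then 1 else 0)))"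
    if xo: "x \<in> Ox" "y \<in> Oy" for x y
  proof -
    have "wt (x @ y) i = (if i = last y then 1/2 else 0)"
      using wt_app_right[OF xy_facts(1,2,3)[OF xo]] i xy_facts(5)[OF xo] by simp
    then show ?thesis using E4_common[OF t _ j xo, of i] i by simp
  qed
  have "real (card {c \<in> consistent_orderings_join X Cs r s. adjacent_circ c i j}) * ((real m - 1) * (real m - 2))
      = (\<Sum>(x, y)\<in>Ox \<times> Oy. real (card {c \<in> AA x y. adjacent_circ c i j}) * ((real m - 1) * (real m - 2)))"
    unfolding card_filter_OJ by (simp add: sum_distrib_right case_prod_beta)
  also have "... = (\<Sum>(x, y)\<in>Ox \<times> Oy. (2 * real (card OC) * tsp_weight Cs j) * (wt (Cs!r) (last x) * (wt (Cs!s) (hd y) * (if i = last y then 1 else 0))))"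
    using trm by (intro sum.cong) auto
  also have "... = (2 * real (card OC) * tsp_weight Cs j) * (\<Sum>(x, y)\<in>Ox \<times> Oy. wt (Cs!r) (last x) * (wt (Cs!s) (hd y) * (if i = last y then 1 else 0)))"
    by (simp add: sum_distrib_left case_prod_beta)
  also have "... = (2 * real (card OC) * tsp_weight Cs j) * ((\<Sum>x\<in>Ox. wt (Cs!r) (last x)) * (\<Sum>y\<in>Oy. wt (Cs!s) (hd y) * (if i = last y then 1 else 0)))"
    by (simp only: sum_prod_sep)
  also have "... = 2 * real (card OC) * tsp_weight Cs i * tsp_weight Cs j"
    using orient_sum_last[OF basics(4,6)] orient_sum_hd_ind[OF basics(5,7) i] wt_eq(2)[OF i] by simp
  finally show ?thesis .
qed

end



theorem mainTheorem3:
  fixes n m r s :: nat and Cs :: "nat list list"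
  defines "X \<equiv> {1..n}"
  defines "oC \<equiv> real (card (consistent_orderings X Cs))"
  defines "\<mu> \<equiv> tsp_weight Cs"
  defines "\<eta> \<equiv> \<lambda>i j. real (eta_join X Cs r s i j)"
  assumes n3: "n \<ge> 3"
    and pco: "partial_circ_ordering X Cs"
    and len: "length Cs = m"
    and m3: "m \<ge> 3"
    and rs: "r < m" "s < m" "r \<noteq> s"
  shows "real (card (consistent_orderings_join X Cs r s)) = 2 * oC / (real m - 1)
    \<and> (\<forall>i\<in>X. \<forall>j\<in>X. i \<noteq> j \<longrightarrow>
        (if consec_in_some_block Cs i j then
           \<eta> i j = 2 * oC / (real m - 1)
         else if (i \<in> set (Cs ! r) \<and> j \<in> set (Cs ! s)) \<or> (i \<in> set (Cs ! s) \<and> j \<in> set (Cs ! r)) then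
           \<eta> i j = 2 * oC * \<mu> i * \<mu> j / (real m - 1)
         else if (\<exists>t<m. \<exists>u<m. t \<noteq> u \<and> t \<notin> {r, s} \<and> u \<notin> {r, s}
                    \<and> i \<in> set (Cs ! t) \<and> j \<in> set (Cs ! u)) then
           \<eta> i j = 4 * oC * \<mu> i * \<mu> j / ((real m - 1) * (real m - 2))
         else if (\<exists>t<m. t \<notin> {r, s} \<and>
                    ((i \<in> set (Cs ! r) \<union> set (Cs ! s) \<and> j \<in> set (Cs ! t)) \<or>
                     (j \<in> set (Cs ! r) \<union> set (Cs ! s) \<and> i \<in> set (Cs ! t)))) then
           \<eta> i j = 2 * oC * \<mu> i * \<mu> j / ((real m - 1) * (real m - 2))
         else \<eta> i j = 0))"
proof -
  have cX: "card X = n" unfolding X_def by simp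
  have n3': "card X \<ge> 3" using cX n3 by simp
  note ctx = pco n3' len m3 rs
  have m1: "real m - 1 > 0" using m3 by simp
  have m2: "real m - 2 > 0" using m3 by simp
  have sym: "\<eta> i j = \<eta> j i" for i j
    unfolding \<eta>_def eta_join_def using adj_circ_sym by metis
  have etaE: "\<eta> i j = real (card {c \<in> consistent_orderings_join X Cs r s. adjacent_circ c i j})" for i j
    unfolding \<eta>_def eta_join_def by simp
  have first: "real (card (consistent_orderings_join X Cs r s)) = 2 * oC / (real m - 1)"
    using OJ_count[OF ctx] m1 unfolding oC_def by (simp add: eq_divide_eq)
  have second: "(if consec_in_some_block Cs i j then
           \<eta> i j = 2 * oC / (real m - 1)
         else if (i \<in> set (Cs ! r) \<and> j \<in> set (Cs ! s)) \<or> (i \<in> set (Cs ! s) \<and> j \<in> set (Cs ! r)) then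
           \<eta> i j = 2 * oC * \<mu> i * \<mu> j / (real m - 1)
         else if (\<exists>t<m. \<exists>u<m. t \<noteq> u \<and> t \<notin> {r, s} \<and> u \<notin> {r, s}
                    \<and> i \<in> set (Cs ! t) \<and> j \<in> set (Cs ! u)) then
           \<eta> i j = 4 * oC * \<mu> i * \<mu> j / ((real m - 1) * (real m - 2))
         else if (\<exists>t<m. t \<notin> {r, s} \<and>
                    ((i \<in> set (Cs ! r) \<union> set (Cs ! s) \<and> j \<in> set (Cs ! t)) \<or>
                     (j \<in> set (Cs ! r) \<union> set (Cs ! s) \<and> i \<in> set (Cs ! t)))) then
           \<eta> i j = 2 * oC * \<mu> i * \<mu> j / ((real m - 1) * (real m - 2))
         else \<eta> i j = 0)" if ij: "i \<in> X" "j \<in> X" "i \<noteq> j" for i j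
  proof (cases "consec_in_some_block Cs i j")
    case True
    then show ?thesis unfolding if_P[OF True] using E1[OF ctx True] first etaE by simp
  next
    case C1: False
    show ?thesis
    proof (cases "(i \<in> set (Cs ! r) \<and> j \<in> set (Cs ! s)) \<or> (i \<in> set (Cs ! s) \<and> j \<in> set (Cs ! r))")
      case True
      have "\<eta> i j * (real m - 1) = 2 * oC * \<mu> i * \<mu> j"
      proof (cases "i \<in> set (Cs ! r) \<and> j \<in> set (Cs ! s)")
        case True
        then show ?thesis using E2[OF ctx, of i j] etaE unfolding oC_def \<mu>_def by simp
      next
        case False
        then have "j \<in> set (Cs ! r) \<and> i \<in> set (Cs ! s)" using \<open>(i \<in> set (Cs ! r) \<and> j \<in> set (Cs ! s)) \<or> (i \<in> set (Cs ! s) \<and> j \<in> set (Cs ! r))\<close> by blast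
        then show ?thesis using E2[OF ctx, of j i] etaE[of j i] sym[of i j] unfolding oC_def \<mu>_def by (simp add: ac_simps)
      qed
      then show ?thesis unfolding if_not_P[OF C1] if_P[OF True] using m1 by (simp add: eq_divide_eq)
    next
      case C2: False
      show ?thesis
      proof (cases "\<exists>t<m. \<exists>u<m. t \<noteq> u \<and> t \<notin> {r, s} \<and> u \<notin> {r, s} \<and> i \<in> set (Cs ! t) \<and> j \<in> set (Cs ! u)")
        case True
        then obtain t u where tu: "t < m" "u < m" "t \<noteq> u" "t \<notin> {r, s}" "u \<notin> {r, s}" "i \<in> set (Cs ! t)" "j \<in> set (Cs ! u)" by blast
        have "\<eta> i j * ((real m - 1) * (real m - 2)) = 4 * oC * \<mu> i * \<mu> j"
          using E3[OF ctx, of t u i j] tu etaE unfolding oC_def \<mu>_def by simp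
        then show ?thesis unfolding if_not_P[OF C1] if_not_P[OF C2] if_P[OF True] using m1 m2 by (simp add: eq_divide_eq)
      next
        case C3: False
        show ?thesis
        proof (cases "\<exists>t<m. t \<notin> {r, s} \<and>
                    ((i \<in> set (Cs ! r) \<union> set (Cs ! s) \<and> j \<in> set (Cs ! t)) \<or>
                     (j \<in> set (Cs ! r) \<union> set (Cs ! s) \<and> i \<in> set (Cs ! t)))")
          case True
          then obtain t where t: "t < m" "t \<notin> {r, s}" and
            h: "(i \<in> set (Cs ! r) \<union> set (Cs ! s) \<and> j \<in> set (Cs ! t)) \<or>
                     (j \<in> set (Cs ! r) \<union> set (Cs ! s) \<and> i \<in> set (Cs ! t))" by blast
          have t': "t < m" "t \<noteq> r" "t \<noteq> s" using t by auto
          have "\<eta> i j * ((real m - 1) * (real m - 2)) = 2 * oC * \<mu> i * \<mu> j"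
          proof (cases "i \<in> set (Cs ! r) \<union> set (Cs ! s) \<and> j \<in> set (Cs ! t)")
            case True
            then consider "i \<in> set (Cs ! r)" | "i \<in> set (Cs ! s)" by blast
            then show ?thesis
            proof cases
              case 1 then show ?thesis using E4R[OF ctx t', of i j] True etaE unfolding oC_def \<mu>_def by simp
            next
              case 2 then show ?thesis using E4S[OF ctx t', of i j] True etaE unfolding oC_def \<mu>_def by simp
            qed
          next
            case False
            then have jj: "j \<in> set (Cs ! r) \<union> set (Cs ! s)" "i \<in> set (Cs ! t)" using h by blast+
            from jj(1) consider "j \<in> set (Cs ! r)" | "j \<in> set (Cs ! s)" by blast
            then show ?thesis
            proof cases
              case 1 then show ?thesis using E4R[OF ctx t', of j i] jj etaE[of j i] sym[of i j]
                  unfolding oC_def \<mu>_def by (simp add: ac_simps)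
            next
              case 2 then show ?thesis using E4S[OF ctx t', of j i] jj etaE[of j i] sym[of i j]
                  unfolding oC_def \<mu>_def by (simp add: ac_simps)
            qed
          qed
          then show ?thesis unfolding if_not_P[OF C1] if_not_P[OF C2] if_not_P[OF C3] if_P[OF True] using m1 m2 by (simp add: eq_divide_eq)
        next
          case C4: False
          obtain t where t: "t < length Cs" "i \<in> set (Cs ! t)" using in_some_block[OF pco ij(1)] by blast
          obtain u where u: "u < length Cs" "j \<in> set (Cs ! u)" using in_some_block[OF pco ij(2)] by blast
          have "t = u"
          proof (rule ccontr)
            assume tu: "t \<noteq> u"
            show False
            proof (cases "t \<in> {r, s}")
              case tin: True
              show False
              proof (cases "u \<in> {r, s}")
                case True
                then have "(t = r \<and> u = s) \<or> (t = s \<and> u = r)" using tin tu by auto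
                then show False
                proof (elim disjE)
                  assume "t = r \<and> u = s"
                  then have "i \<in> set (Cs ! r) \<and> j \<in> set (Cs ! s)" using t(2) u(2) by simp
                  then show False using C2 by blast
                next
                  assume "t = s \<and> u = r"
                  then have "i \<in> set (Cs ! s) \<and> j \<in> set (Cs ! r)" using t(2) u(2) by simp
                  then show False using C2 by blast
                qed
              next
                case False
                have "i \<in> set (Cs ! r) \<union> set (Cs ! s)" using tin t(2) by auto
                moreover have "u < m" using u(1) len by simp
                ultimately show False using C4 u(2) False by blast
              qed
            next
              case tout: False
              show False
              proof (cases "u \<in> {r, s}")
                case True
                have "j \<in> set (Cs ! r) \<union> set (Cs ! s)" using True u(2) by auto
                moreover have "t < m" using t(1) len by simp
                ultimately show False using C4 t(2) tout by blast
              next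
                case False
                have "t < m" "u < m" using t(1) u(1) len by auto
                then show False using C3 t(2) u(2) tout False tu by blast
              qed
            qed
          qed
          then have e: "{c \<in> consistent_orderings_join X Cs r s. adjacent_circ c i j} = {}"
            using E5[OF ctx, of t i j] t u C1 len by simp
          show ?thesis unfolding if_not_P[OF C1] if_not_P[OF C2] if_not_P[OF C3] if_not_P[OF C4]
            by (simp only: etaE e card.empty of_nat_0)
        qed
      qed
    qed
  qed
  show ?thesis using first second by blast
qed


end
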